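(* Let $n\geq 1$, let $\pi\in S_n$ be a 321-avoiding permutation and let $A_\pi$ be the associated linear Nakayama algebra (with $n+1$ simple modules) with Jacobson radical $J$. Then $\operatorname{Ext}^1_{A_\pi}(J,J)\cong K^{\mathfrak{s}(\pi)}$ as $K$-vector spaces.
   Context: $K$ is a field. A linear Nakayama algebra with $m$ simple modules is a connected algebra $A=KQ/I$ with $Q$ the quiver $0\to1\to\cdots\to m-1$ and $I$ admissible; modules are finite-dimensional right modules, $J$ is the Jacobson radical of $A$ viewed as right module. The indecomposable projective $e_iA$ is uniserial with composition factors $S_i,\dots,S_{i+c_i-1}$, $c_i=\dim_K e_iA$, and $A$ is determined by $[c_0,\dots,c_{m-1}]$. For $m=n+1$, the Dyck path $\mathcal D_A$ of $A$ is the lattice path from $(0,0)$ to $(2n,0)$ whose vertex with first coordinate $x$ has height $h(x)=\max\{k-1: 0\le i\le n,\ 1\le k\le c_i,\ 2i+k-1=2n-x\}$; this is a bijection between isomorphism classes of such algebras and Dyck paths of semilength $n$. Billey–Jockusch–Stanley bijection: for a Dyck path $u^{a_1}d^{d_1}\cdots u^{a_\ell}d^{d_\ell}$ ($a_i,d_i\ge1$) put $A_j=a_1+\dots+a_j$, $D_j=d_1+\dots+d_j$ ($1\le j\le\ell-1$), set $\pi(D_j)=A_j+1$ and fill the remaining positions in increasing order with the remaining values of $[n]$; this is a bijection onto 321-avoiding permutations of $[n]$. $A_\pi$ is the linear Nakayama algebra whose Dyck path corresponds to $\pi$. Support size: $\mathfrak s(\pi)$ is the number of distinct simple transpositions $s_i=(i,i+1)$,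 $1\le i\le n-1$, occurring in a reduced (minimal length) expression of $\pi$ as a product of the $s_i$. *)

theory Defs
  imports Complex_Main "HOL-Library.Function_Algebras" "HOL-Combinatorics.Permutations"
begin

definition avoids_321 :: "nat \<Rightarrow> (nat \<Rightarrow> nat) \<Rightarrow> bool" where
  "avoids_321 n \<pi> \<longleftrightarrow>
     \<not> (\<exists>i j k. 1 \<le> i \<and> i < j \<and> j < k \<and> k \<le> n \<and> \<pi> i > \<pi> j \<and> \<pi> j > \<pi> k)"

definition word_perm :: "nat list \<Rightarrow> nat \<Rightarrow> nat" where
  "word_perm w = foldr (\<lambda>i f. transpose i (Suc i) \<circ> f) w id"

definition reduced_word :: "nat \<Rightarrow> (nat \<Rightarrow> nat) \<Rightarrow> nat list \<Rightarrow> bool" where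
  "reduced_word n \<pi> w \<longleftrightarrow>
     set w \<subseteq> {1..<n} \<and> word_perm w = \<pi> \<and>
     (\<forall>v. set v \<subseteq> {1..<n} \<and> word_perm v = \<pi> \<longrightarrow> length w \<le> length v)"

definition support_size :: "nat \<Rightarrow> (nat \<Rightarrow> nat) \<Rightarrow> nat" where
  "support_size n \<pi> = card (set (SOME w. reduced_word n \<pi> w))"

text \<open>Dyck words: True = up step u, False = down step d.
  valleys w = positions p such that step p-1 is d and step p is u, i.e. the
  boundaries between d^{d_j} and u^{a_{j+1}}; at valley j the number of u's
  before it is A_j and the number of d's before it is D_j.\<close>
definition valleys :: "bool list \<Rightarrow> nat set" where
  "valleys w = {p. 0 < p \<and> p < length w \<and> \<not> w ! (p - 1) \<and> w ! p}"

definition ups_before :: "bool list \<Rightarrow> nat \<Rightarrow> nat" where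
  "ups_before w p = length (filter id (take p w))"

definition downs_before :: "bool list \<Rightarrow> nat \<Rightarrow> nat" where
  "downs_before w p = length (filter Not (take p w))"

definition bjs_perm :: "nat \<Rightarrow> bool list \<Rightarrow> (nat \<Rightarrow> nat) \<Rightarrow> bool" where
  "bjs_perm n w \<pi> \<longleftrightarrow>
     \<pi> permutes {1..n} \<and>
     (\<forall>p \<in> valleys w. \<pi> (downs_before w p) = ups_before w p + 1) \<and>
     strict_mono_on ({1..n} - downs_before w ` valleys w) \<pi>"

text \<open>c = [c_0, ..., c_{m-1}] is the Kupisch series of a connected linear Nakayama
  algebra KQ/I with I admissible.\<close>
definition kupisch :: "nat list \<Rightarrow> bool" where
  "kupisch c \<longleftrightarrow> c \<noteq> [] \<and> c ! (length c - 1) = 1 \<and>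
     (\<forall>i. Suc i < length c \<longrightarrow> 2 \<le> c ! i \<and> c ! i \<le> c ! Suc i + 1)"

definition dyck_height :: "nat list \<Rightarrow> nat \<Rightarrow> nat" where
  "dyck_height c x = (let n = length c - 1 in
     Max {k - 1 | i k. i \<le> n \<and> 1 \<le> k \<and> k \<le> c ! i \<and> 2 * i + k - 1 = 2 * n - x})"

definition dyck_word :: "nat list \<Rightarrow> bool list" where
  "dyck_word c = map (\<lambda>x. dyck_height c x < dyck_height c (Suc x)) [0..<2 * (length c - 1)]"

text \<open>A right module over KQ/I is a representation: vector spaces K^(d j) at vertex j and
  linear maps a j : K^(d j) -> K^(d (j+1)) (matrices: a j r s, r < d (j+1), s < d j).\<close>

definition mcomp :: "(nat \<Rightarrow> nat \<Rightarrow> 'k::field) \<Rightarrow> (nat \<Rightarrow> nat \<Rightarrow> 'k) \<Rightarrow> nat \<Rightarrow> nat \<Rightarrow> nat \<Rightarrow> 'k" where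
  "mcomp G F k r s = (\<Sum>t<k. G r t * F t s)"

fun path_map :: "(nat \<Rightarrow> nat) \<Rightarrow> (nat \<Rightarrow> nat \<Rightarrow> nat \<Rightarrow> 'k::field) \<Rightarrow> nat \<Rightarrow> nat \<Rightarrow> nat \<Rightarrow> nat \<Rightarrow> 'k" where
  "path_map d a i 0 = (\<lambda>r s. if r = s then 1 else 0)"
| "path_map d a i (Suc l) = mcomp (a (i + l)) (path_map d a i l) (d (i + l))"

text \<open>The representation satisfies the relations of A: the paths of length c_i from i
  (which generate I) act as zero.\<close>
definition is_module :: "nat list \<Rightarrow> (nat \<Rightarrow> nat) \<Rightarrow> (nat \<Rightarrow> nat \<Rightarrow> nat \<Rightarrow> 'k::field) \<Rightarrow> bool" where
  "is_module c d a \<longleftrightarrow>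
     (\<forall>i < length c. i + c ! i < length c \<longrightarrow>
        (\<forall>r s. r < d (i + c ! i) \<and> s < d i \<longrightarrow> path_map d a i (c ! i) r s = 0))"

text \<open>The radical J of A_A: J = direct sum of rad(e_i A); a basis of J e_j is given by the
  paths from i to j of positive length nonzero in A, i.e. i < j < i + c_i.\<close>
definition rad_idx :: "nat list \<Rightarrow> nat \<Rightarrow> nat list" where
  "rad_idx c j = filter (\<lambda>i. j < i + c ! i) [0..<j]"

definition rad_dim :: "nat list \<Rightarrow> nat \<Rightarrow> nat" where
  "rad_dim c j = (if j < length c then length (rad_idx c j) else 0)"

definition rad_map :: "nat list \<Rightarrow> nat \<Rightarrow> nat \<Rightarrow> nat \<Rightarrow> 'k::field" where
  "rad_map c j r s = (if Suc j < length c \<and> r < rad_dim c (Suc j) \<and> s < rad_dim c j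
       \<and> rad_idx c (Suc j) ! r = rad_idx c j ! s then 1 else 0)"

type_synonym 'k cochain = "nat \<Rightarrow> nat \<Rightarrow> nat \<Rightarrow> 'k"

definition cscale :: "'k::field \<Rightarrow> 'k cochain \<Rightarrow> 'k cochain" where
  "cscale x f = (\<lambda>j r s. x * f j r s)"

text \<open>1-cochains: families f_j : M_j -> N_{j+1} over the arrows j -> j+1.\<close>
definition cochains1 :: "nat \<Rightarrow> (nat \<Rightarrow> nat) \<Rightarrow> (nat \<Rightarrow> nat) \<Rightarrow> 'k::field cochain set" where
  "cochains1 m dM dN = {f. \<forall>j r s. f j r s \<noteq> 0 \<longrightarrow> Suc j < m \<and> r < dN (Suc j) \<and> s < dM j}"

text \<open>The middle term E_f of the extension 0 -> N -> E_f -> M -> 0 of representations with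
  E_j = N_j (+) M_j and arrow maps [[aN_j, f_j], [0, aM_j]].\<close>
definition ext_dim :: "(nat \<Rightarrow> nat) \<Rightarrow> (nat \<Rightarrow> nat) \<Rightarrow> nat \<Rightarrow> nat" where
  "ext_dim dM dN j = dN j + dM j"

definition ext_map :: "(nat \<Rightarrow> nat) \<Rightarrow> (nat \<Rightarrow> nat \<Rightarrow> nat \<Rightarrow> 'k::field) \<Rightarrow>
     (nat \<Rightarrow> nat) \<Rightarrow> (nat \<Rightarrow> nat \<Rightarrow> nat \<Rightarrow> 'k) \<Rightarrow> 'k cochain \<Rightarrow> nat \<Rightarrow> nat \<Rightarrow> nat \<Rightarrow> 'k" where
  "ext_map dM aM dN aN f j r s =
     (if r < dN (Suc j) then (if s < dN j then aN j r s else f j r (s - dN j))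
      else (if s < dN j then 0 else aM j (r - dN (Suc j)) (s - dN j)))"

definition ext_cocycles :: "nat list \<Rightarrow> (nat \<Rightarrow> nat) \<Rightarrow> (nat \<Rightarrow> nat \<Rightarrow> nat \<Rightarrow> 'k::field) \<Rightarrow>
     (nat \<Rightarrow> nat) \<Rightarrow> (nat \<Rightarrow> nat \<Rightarrow> nat \<Rightarrow> 'k) \<Rightarrow> 'k cochain set" where
  "ext_cocycles c dM aM dN aN =
     {f \<in> cochains1 (length c) dM dN. is_module c (ext_dim dM dN) (ext_map dM aM dN aN f)}"

definition ext_coboundaries :: "nat list \<Rightarrow> (nat \<Rightarrow> nat) \<Rightarrow> (nat \<Rightarrow> nat \<Rightarrow> nat \<Rightarrow> 'k::field) \<Rightarrow>
     (nat \<Rightarrow> nat) \<Rightarrow> (nat \<Rightarrow> nat \<Rightarrow> nat \<Rightarrow> 'k) \<Rightarrow> 'k cochain set" where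
  "ext_coboundaries c dM aM dN aN =
     {f. \<exists>g :: 'k cochain. (\<forall>j r s. g j r s \<noteq> 0 \<longrightarrow> j < length c \<and> r < dN j \<and> s < dM j) \<and>
        f = (\<lambda>j r s. if Suc j < length c \<and> r < dN (Suc j) \<and> s < dM j
                     then mcomp (aN j) (g j) (dN j) r s - mcomp (g (Suc j)) (aM j) (dM (Suc j)) r s
                     else 0)}"

definition ext1_dim :: "nat list \<Rightarrow> (nat \<Rightarrow> nat) \<Rightarrow> (nat \<Rightarrow> nat \<Rightarrow> nat \<Rightarrow> 'k::field) \<Rightarrow>
     (nat \<Rightarrow> nat) \<Rightarrow> (nat \<Rightarrow> nat \<Rightarrow> nat \<Rightarrow> 'k) \<Rightarrow> nat" where
  "ext1_dim c dM aM dN aN =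
     vector_space.dim cscale (ext_cocycles c dM aM dN aN)
     - vector_space.dim cscale (ext_coboundaries c dM aM dN aN)"

end

theory Submission
  imports Defs
begin


definition invs :: "nat \<Rightarrow> (nat \<Rightarrow> nat) \<Rightarrow> (nat \<times> nat) set" where
  "invs n \<sigma> = {(a,b). a \<in> {1..n} \<and> b \<in> {1..n} \<and> a < b \<and> \<sigma> b < \<sigma> a}"

definition ninv :: "nat \<Rightarrow> (nat \<Rightarrow> nat) \<Rightarrow> nat" where
  "ninv n \<sigma> = card (invs n \<sigma>)"

lemma finite_invs: "finite (invs n \<sigma>)"
  by (rule finite_subset[of _ "{1..n} \<times> {1..n}"]) (auto simp: invs_def)

lemma word_perm_Nil[simp]: "word_perm [] = id"
  by (simp add: word_perm_def)

lemma word_perm_Cons[simp]: "word_perm (j#w) = transpose j (Suc j) \<circ> word_perm w"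
  by (simp add: word_perm_def)

lemma word_perm_permutes: "set w \<subseteq> {1..<n} \<Longrightarrow> word_perm w permutes {1..n}"
proof (induction w)
  case Nil then show ?case by (simp only: word_perm_Nil) (rule permutes_id)
next
  case (Cons j w)
  then have "transpose j (Suc j) permutes {1..n}" by (intro permutes_swap_id) auto
  with Cons show ?case unfolding word_perm_Cons by (intro permutes_compose) auto
qed

lemma invs_id[simp]: "invs n id = {}" "invs n (\<lambda>x. x) = {}"
  by (auto simp: invs_def)

lemma ninv_id[simp]: "ninv n id = 0" "ninv n (\<lambda>x. x) = 0"
  by (simp_all add: ninv_def)

lemma invs_step:
  assumes \<sigma>: "\<sigma> permutes {1..n}" and j: "1 \<le> j" "j < n"
    and p: "\<sigma> p = j" and q: "\<sigma> q = Suc j" and pq: "p < q"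
  shows "invs n (transpose j (Suc j) \<circ> \<sigma>) = insert (p,q) (invs n \<sigma>)"
    and "(p,q) \<notin> invs n \<sigma>"
proof -
  have inj: "inj \<sigma>" using \<sigma> by (rule permutes_inj)
  have pin: "p \<in> {1..n}" using permutes_in_image[OF \<sigma>, of p] p j by auto
  have qin: "q \<in> {1..n}" using permutes_in_image[OF \<sigma>, of q] q j by auto
  show "(p,q) \<notin> invs n \<sigma>" using p q by (auto simp: invs_def)
  show "invs n (transpose j (Suc j) \<circ> \<sigma>) = insert (p,q) (invs n \<sigma>)"
  proof (rule set_eqI, clarify)
    fix a b
    have pe: "\<sigma> x = j \<longleftrightarrow> x = p" for x using inj p by (auto dest: injD)
    have qe: "\<sigma> x = Suc j \<longleftrightarrow> x = q" for x using inj q by (metis inj_eq)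
    show "(a,b) \<in> invs n (transpose j (Suc j) \<circ> \<sigma>) \<longleftrightarrow> (a,b) \<in> insert (p,q) (invs n \<sigma>)"
      using pe[of a] pe[of b] qe[of a] qe[of b] pin qin pq
      by (auto simp: invs_def transpose_def)
  qed
qed

lemma ninv_step_up:
  assumes "\<sigma> permutes {1..n}" "1 \<le> j" "j < n" "\<sigma> p = j" "\<sigma> q = Suc j" "p < q"
  shows "ninv n (transpose j (Suc j) \<circ> \<sigma>) = Suc (ninv n \<sigma>)"
  using invs_step[OF assms] finite_invs by (simp add: ninv_def)

lemma ninv_step:
  assumes \<sigma>: "\<sigma> permutes {1..n}" and j: "1 \<le> j" "j < n"
  shows "ninv n (transpose j (Suc j) \<circ> \<sigma>) = Suc (ninv n \<sigma>) \<and>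
            inv \<sigma> j < inv \<sigma> (Suc j)
       \<or> ninv n \<sigma> = Suc (ninv n (transpose j (Suc j) \<circ> \<sigma>)) \<and>
            inv \<sigma> (Suc j) < inv \<sigma> j"
proof -
  define p where "p = inv \<sigma> j"
  define q where "q = inv \<sigma> (Suc j)"
  have p: "\<sigma> p = j" and q: "\<sigma> q = Suc j"
    using permutes_inverses[OF \<sigma>] by (auto simp: p_def q_def)
  have "p \<noteq> q" using p q by auto
  then consider "p < q" | "q < p" by linarith
  then show ?thesis
  proof cases
    case 1
    then show ?thesis using ninv_step_up[OF \<sigma> j p q] p_def q_def by auto
  next
    case 2
    let ?s = "transpose j (Suc j)"
    have \<sigma>': "?s \<circ> \<sigma> permutes {1..n}"
      using j by (intro permutes_compose[OF \<sigma>] permutes_swap_id) auto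
    have "ninv n (?s \<circ> (?s \<circ> \<sigma>)) = Suc (ninv n (?s \<circ> \<sigma>))"
      by (rule ninv_step_up[OF \<sigma>' j, of q p]) (use p q 2 in auto)
    moreover have "?s \<circ> (?s \<circ> \<sigma>) = \<sigma>"
      by (metis comp_assoc transpose_comp_involutory id_comp)
    ultimately have "ninv n \<sigma> = Suc (ninv n (?s \<circ> \<sigma>))"
      by simp
    then show ?thesis using 2 p_def q_def by auto
  qed
qed

lemma ninv_word: "set w \<subseteq> {1..<n} \<Longrightarrow> ninv n (word_perm w) \<le> length w"
proof (induction w)
  case Nil then show ?case by simp
next
  case (Cons j w)
  then have wp: "word_perm w permutes {1..n}" by (intro word_perm_permutes) auto
  have "ninv n (word_perm (j#w)) \<le> Suc (ninv n (word_perm w))"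
    using ninv_step[OF wp, of j] Cons(2) unfolding word_perm_Cons by auto
  moreover have "ninv n (word_perm w) \<le> length w" using Cons by auto
  ultimately show ?case by (simp only: length_Cons)
qed

lemma strict_perm_id:
  assumes \<tau>: "\<tau> permutes {1..n}" and mono: "\<And>j. 1 \<le> j \<Longrightarrow> j < n \<Longrightarrow> \<tau> j < \<tau> (Suc j)"
  shows "\<tau> = id"
proof -
  have ge: "k \<le> \<tau> k" if "1 \<le> k" "k \<le> n" for k
    using that
  proof (induction k)
    case 0 then show ?case by simp
  next
    case (Suc k)
    show ?case
    proof (cases "k = 0")
      case True
      then show ?thesis using permutes_in_image[OF \<tau>, of 1] Suc by auto
    next
      case False
      then show ?thesis using Suc mono[of k] by auto
    qed
  qed
  have le: "\<tau> (n - d) \<le> n - d" if "d < n" for d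
    using that
  proof (induction d)
    case 0 then show ?case using permutes_in_image[OF \<tau>, of n] by auto
  next
    case (Suc d)
    then have "\<tau> (n - Suc d) < \<tau> (Suc (n - Suc d))" by (intro mono) auto
    moreover have "Suc (n - Suc d) = n - d" using Suc by auto
    ultimately show ?case using Suc by auto
  qed
  show ?thesis
  proof
    fix x
    show "\<tau> x = id x"
    proof (cases "x \<in> {1..n}")
      case True
      then have "\<tau> x \<le> x" using le[of "n - x"] by auto
      then show ?thesis using ge[of x] True by auto
    next
      case False
      then show ?thesis using permutes_not_in[OF \<tau>] by auto
    qed
  qed
qed

lemma exists_word:
  "\<sigma> permutes {1..n} \<Longrightarrow> \<exists>w. set w \<subseteq> {1..<n} \<and> word_perm w = \<sigma> \<and> length w = ninv n \<sigma>"
proof (induction "ninv n \<sigma>" arbitrary: \<sigma>)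
  case 0
  have "\<sigma> = id"
  proof (rule ccontr)
    assume "\<sigma> \<noteq> id"
    have "inv \<sigma> \<noteq> id"
    proof
      assume "inv \<sigma> = id"
      then have "\<sigma> x = x" for x using permutes_inverses(1)[OF 0(2), of x] by simp
      with \<open>\<sigma> \<noteq> id\<close> show False by auto
    qed
    then obtain j where j: "1 \<le> j" "j < n" "\<not> inv \<sigma> j < inv \<sigma> (Suc j)"
      using strict_perm_id[OF permutes_inv[OF 0(2)]] by blast
    from ninv_step[OF 0(2) j(1,2)] j(3) 0(1) show False by auto
  qed
  then show ?case by (intro exI[of _ "[]"]) auto
next
  case (Suc k)
  have "\<sigma> \<noteq> id" using Suc(2) by (auto simp: ninv_def)
  have "inv \<sigma> \<noteq> id"
  proof
    assume "inv \<sigma> = id"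
    then have "\<sigma> x = x" for x using permutes_inverses(1)[OF Suc(3), of x] by simp
    with \<open>\<sigma> \<noteq> id\<close> show False by auto
  qed
  then obtain j where j: "1 \<le> j" "j < n" "\<not> inv \<sigma> j < inv \<sigma> (Suc j)"
    using strict_perm_id[OF permutes_inv[OF Suc(3)]] by blast
  let ?s = "transpose j (Suc j)"
  have \<sigma>': "?s \<circ> \<sigma> permutes {1..n}"
    using j by (intro permutes_compose[OF Suc(3)] permutes_swap_id) auto
  from ninv_step[OF Suc(3) j(1,2)] j(3) have "ninv n \<sigma> = Suc (ninv n (?s \<circ> \<sigma>))" by auto
  with Suc(2) have "k = ninv n (?s \<circ> \<sigma>)" by simp
  from Suc(1)[OF this \<sigma>'] obtain w where w: "set w \<subseteq> {1..<n}" "word_perm w = ?s \<circ> \<sigma>"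
    "length w = ninv n (?s \<circ> \<sigma>)" by blast
  have "word_perm (j # w) = \<sigma>" using w(2) by (simp add: fun_eq_iff)
  then show ?case using w j \<open>ninv n \<sigma> = Suc (ninv n (?s \<circ> \<sigma>))\<close>
    by (intro exI[of _ "j # w"]) auto
qed

lemma word_preserves:
  "set w \<subseteq> {1..<n} \<Longrightarrow> i \<notin> set w \<Longrightarrow> word_perm w ` {1..i} = {1..i}"
proof (induction w)
  case Nil then show ?case by simp
next
  case (Cons j w)
  have "transpose j (Suc j) ` {1..i} = {1..i}"
    using Cons(2,3) by (auto simp: transpose_def image_iff)
  moreover have "word_perm w ` {1..i} = {1..i}" using Cons by auto
  ultimately show ?case unfolding word_perm_Cons image_comp[symmetric] by simp
qed

definition Phi :: "nat \<Rightarrow> (nat \<Rightarrow> nat) \<Rightarrow> nat set" where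
  "Phi i \<sigma> = {a \<in> {1..i}. i < \<sigma> a}"

lemma reduced_Phi:
  "set w \<subseteq> {1..<n} \<Longrightarrow> ninv n (word_perm w) = length w \<Longrightarrow> i \<in> set w \<Longrightarrow>
    Phi i (word_perm w) \<noteq> {}"
proof (induction w)
  case Nil then show ?case by simp
next
  case (Cons j w)
  let ?s = "transpose j (Suc j)"
  let ?\<sigma> = "word_perm w"
  have \<sigma>: "?\<sigma> permutes {1..n}" using Cons by (intro word_perm_permutes) auto
  have j: "1 \<le> j" "j < n" using Cons(2) by auto
  have lw: "ninv n ?\<sigma> \<le> length w" using Cons(2) by (intro ninv_word) auto
  have c3: "ninv n (?s \<circ> ?\<sigma>) = Suc (length w)"
    using Cons(3) by (simp only: word_perm_Cons length_Cons)
  from ninv_step[OF \<sigma> j] c3 lw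
  have red: "ninv n ?\<sigma> = length w" and up: "inv ?\<sigma> j < inv ?\<sigma> (Suc j)" by auto
  define p where "p = inv ?\<sigma> j"
  define q where "q = inv ?\<sigma> (Suc j)"
  have p: "?\<sigma> p = j" and q: "?\<sigma> q = Suc j"
    using permutes_inverses[OF \<sigma>] by (auto simp: p_def q_def)
  have inj: "inj ?\<sigma>" using \<sigma> by (rule permutes_inj)
  have pe: "?\<sigma> x = j \<longleftrightarrow> x = p" for x using inj p by (auto dest: injD)
  have qe: "?\<sigma> x = Suc j \<longleftrightarrow> x = q" for x using inj q by (metis inj_eq)
  have pq: "p < q" using up p_def q_def by simp
  have mono: "Phi i ?\<sigma> \<noteq> {} \<Longrightarrow> Phi i (?s \<circ> ?\<sigma>) \<noteq> {}"
  proof -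
    assume "Phi i ?\<sigma> \<noteq> {}"
    then obtain a where a: "a \<in> {1..i}" "i < ?\<sigma> a" by (auto simp: Phi_def)
    show ?thesis
    proof (cases "j = i")
      case False
      then have "i < ?s (?\<sigma> a)" using a j by (auto simp: transpose_def)
      then show ?thesis using a by (auto simp: Phi_def)
    next
      case True
      show ?thesis
      proof (cases "a = q")
        case False
        then have "?\<sigma> a \<noteq> Suc j" using qe by auto
        then have "i < ?s (?\<sigma> a)" using a True by (auto simp: transpose_def)
        then show ?thesis using a by (auto simp: Phi_def)
      next
        case aq: True
        have "?s (?\<sigma> p) = Suc i" using p True by simp
        moreover have "p \<in> {1..i}"
        proof -
          have "p \<in> {1..n}" using permutes_in_image[OF \<sigma>, of p] p j by auto
          then show ?thesis using pq aq a by auto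
        qed
        ultimately show ?thesis by (auto simp: Phi_def)
      qed
    qed
  qed
  show ?case
  proof (cases "i \<in> set w")
    case True
    have "Phi i ?\<sigma> \<noteq> {}" using Cons.IH[OF _ red True] Cons(2) by auto
    from mono[OF this] show ?thesis unfolding word_perm_Cons by assumption
  next
    case False
    then have ij: "j = i" using Cons(4) by auto
    show ?thesis
    proof (cases "Phi i ?\<sigma> = {}")
      case False
      show ?thesis using mono[OF False] unfolding word_perm_Cons by assumption
    next
      case True
      have sub: "?\<sigma> ` {1..i} \<subseteq> {1..i}"
      proof
        fix y assume "y \<in> ?\<sigma> ` {1..i}"
        then obtain x where x: "x \<in> {1..i}" "y = ?\<sigma> x" by auto
        have "\<not> i < ?\<sigma> x" using True x by (auto simp: Phi_def)
        moreover have "?\<sigma> x \<in> {1..n}" using permutes_in_image[OF \<sigma>, of x] x j ij by auto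
        ultimately show "y \<in> {1..i}" using x by auto
      qed
      have "?\<sigma> ` {1..i} = {1..i}"
        by (rule endo_inj_surj[OF _ sub]) (auto intro: inj_on_subset[OF inj])
      then have "i \<in> ?\<sigma> ` {1..i}" using j ij by auto
      then obtain x where x: "x \<in> {1..i}" "?\<sigma> x = i" by auto
      then have "?s (?\<sigma> x) = Suc i" using ij by simp
      then show ?thesis using x by (auto simp: Phi_def)
    qed
  qed
qed

theorem support_size_eq:
  assumes \<pi>: "\<pi> permutes {1..n}"
  shows "set (SOME w. reduced_word n \<pi> w) = {i \<in> {1..<n}. \<pi> ` {1..i} \<noteq> {1..i}}"
proof -
  obtain w0 where w0: "set w0 \<subseteq> {1..<n}" "word_perm w0 = \<pi>" "length w0 = ninv n \<pi>"
    using exists_word[OF \<pi>] by blast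
  have "reduced_word n \<pi> w0"
    unfolding reduced_word_def using w0 ninv_word by fastforce
  then have r: "reduced_word n \<pi> (SOME w. reduced_word n \<pi> w)" by (rule someI)
  define w where "w = (SOME w. reduced_word n \<pi> w)"
  have w: "set w \<subseteq> {1..<n}" "word_perm w = \<pi>" "length w \<le> length w0"
    using r w0 unfolding w_def reduced_word_def by auto
  have red: "ninv n (word_perm w) = length w"
    using ninv_word[OF w(1)] w w0 by auto
  show ?thesis
    unfolding w_def[symmetric]
  proof (intro set_eqI iffI)
    fix i assume i: "i \<in> set w"
    then have "Phi i \<pi> \<noteq> {}" using reduced_Phi[OF w(1) red i] w by simp
    then obtain a where "a \<in> {1..i}" "i < \<pi> a" by (auto simp: Phi_def)
    then have "\<pi> ` {1..i} \<noteq> {1..i}" by (metis atLeastAtMost_iff image_eqI not_le)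
    then show "i \<in> {i \<in> {1..<n}. \<pi> ` {1..i} \<noteq> {1..i}}" using i w(1) by auto
  next
    fix i assume "i \<in> {i \<in> {1..<n}. \<pi> ` {1..i} \<noteq> {1..i}}"
    then show "i \<in> set w" using word_preserves[OF w(1), of i] w(2) by auto
  qed
qed




context vector_space
begin

lemma dim_quotient_count:
  fixes Z B T :: "'b set" and Q :: "'q set" and w :: "'q \<Rightarrow> 'b" and \<sigma> :: "'q \<Rightarrow> 'b \<Rightarrow> 'a"
  assumes BZ: "B \<subseteq> Z" and ZT: "Z \<subseteq> span T" and finT: "finite T" and finQ: "finite Q"
    and wZ: "\<And>q. q \<in> Q \<Longrightarrow> w q \<in> Z"
    and add: "\<And>q x y. q \<in> Q \<Longrightarrow> \<sigma> q (x + y) = \<sigma> q x + \<sigma> q y"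
    and scl: "\<And>q a x. q \<in> Q \<Longrightarrow> \<sigma> q (a *s x) = a * \<sigma> q x"
    and \<sigma>B: "\<And>q x. q \<in> Q \<Longrightarrow> x \<in> B \<Longrightarrow> \<sigma> q x = 0"
    and \<sigma>w: "\<And>q q'. q \<in> Q \<Longrightarrow> q' \<in> Q \<Longrightarrow> \<sigma> q (w q') = (if q = q' then 1 else 0)"
    and cover: "\<And>x. x \<in> Z \<Longrightarrow> x - (\<Sum>q\<in>Q. \<sigma> q x *s w q) \<in> span B"
  shows "dim Z = dim B + card Q"
proof -
  obtain b where b: "b \<subseteq> B" "independent b" "B \<subseteq> span b" "card b = dim B"
    using basis_exists[of B] by blast
  have finb: "finite b"
    using independent_span_bound[OF finT b(2)] b(1) BZ ZT by auto
  have \<sigma>0: "\<sigma> q 0 = 0" if "q \<in> Q" for q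
    using scl[OF that, of 0 0] by simp
  have span0: "\<sigma> q x = 0" if q: "q \<in> Q" and x: "x \<in> span S" and S: "\<And>y. y \<in> S \<Longrightarrow> \<sigma> q y = 0"
    for q x S
    using x
  proof (induction rule: span_induct_alt)
    case base then show ?case using \<sigma>0[OF q] .
  next
    case (step c x y)
    then show ?case using add[OF q] scl[OF q] S by simp
  qed
  have winj: "inj_on w Q"
  proof (rule inj_onI)
    fix q q' assume "q \<in> Q" "q' \<in> Q" "w q = w q'"
    then have "\<sigma> q (w q) = \<sigma> q (w q')" by simp
    then show "q = q'" using \<sigma>w[OF \<open>q \<in> Q\<close> \<open>q \<in> Q\<close>] \<sigma>w[OF \<open>q \<in> Q\<close> \<open>q' \<in> Q\<close>]
      by (auto split: if_splits)
  qed
  have indep: "independent (b \<union> w ` Q') \<and> card (b \<union> w ` Q') = card b + card Q'" if "Q' \<subseteq> Q" for Q'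
  proof -
    have "finite Q'" by (rule finite_subset[OF that finQ])
    then show ?thesis using that
    proof (induction Q' rule: finite_induct)
      case empty then show ?case using b by simp
    next
      case (insert q Q')
      have q: "q \<in> Q" using insert.prems by blast
      have QQ: "Q' \<subseteq> Q" using insert.prems by blast
      have IH: "independent (b \<union> w ` Q')" "card (b \<union> w ` Q') = card b + card Q'"
        using insert.IH[OF QQ] by blast+
      have vanish: "\<sigma> q y = 0" if yin: "y \<in> b \<union> w ` Q'" for y
      proof (cases "y \<in> b")
        case True then show ?thesis using \<sigma>B[OF q] b(1) by blast
      next
        case False
        then obtain q' where q': "q' \<in> Q'" "y = w q'" using yin by blast
        then have "q' \<in> Q" "q \<noteq> q'" using QQ insert.hyps(2) by blast+
        then show ?thesis using \<sigma>w[OF q, of q'] q' by simp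
      qed
      have nsp: "w q \<notin> span (b \<union> w ` Q')"
      proof
        assume "w q \<in> span (b \<union> w ` Q')"
        then have "\<sigma> q (w q) = 0" by (rule span0[OF q _ vanish])
        then show False using \<sigma>w[OF q q] by simp
      qed
      have nmem: "w q \<notin> b \<union> w ` Q'"
      proof
        assume "w q \<in> b \<union> w ` Q'"
        then have "w q \<in> span (b \<union> w ` Q')" by (rule span_base)
        with nsp show False by contradiction
      qed
      have eq: "b \<union> w ` insert q Q' = insert (w q) (b \<union> w ` Q')" by blast
      have fin: "finite (b \<union> w ` Q')" using finb insert.hyps(1) by blast
      have "independent (insert (w q) (b \<union> w ` Q'))"
        using independent_insertI[OF nsp IH(1)] .
      moreover have "card (insert (w q) (b \<union> w ` Q')) = Suc (card (b \<union> w ` Q'))"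
        by (rule card_insert_disjoint[OF fin nmem])
      moreover have "card (insert q Q') = Suc (card Q')"
        by (rule card_insert_disjoint[OF insert.hyps(1,2)])
      ultimately show ?case unfolding eq using IH(2) by simp
    qed
  qed
  have sub: "b \<union> w ` Q \<subseteq> Z" using b(1) BZ wZ by auto
  have spanZ: "Z \<subseteq> span (b \<union> w ` Q)"
  proof
    fix x assume x: "x \<in> Z"
    have h1: "span B \<subseteq> span b" by (rule span_minimal[OF b(3) subspace_span])
    have h2: "span b \<subseteq> span (b \<union> w ` Q)" by (rule span_mono) blast
    have "x - (\<Sum>q\<in>Q. \<sigma> q x *s w q) \<in> span (b \<union> w ` Q)"
      using cover[OF x] h1 h2 by blast
    moreover have "(\<Sum>q\<in>Q. \<sigma> q x *s w q) \<in> span (b \<union> w ` Q)"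
      by (intro span_sum span_scale span_base) auto
    ultimately have "(x - (\<Sum>q\<in>Q. \<sigma> q x *s w q)) + (\<Sum>q\<in>Q. \<sigma> q x *s w q) \<in> span (b \<union> w ` Q)"
      by (rule span_add)
    then show "x \<in> span (b \<union> w ` Q)" by simp
  qed
  show ?thesis
    using dim_unique[OF sub spanZ] indep[of Q] b(4) by simp
qed

end


definition EE :: "nat list \<Rightarrow> nat \<Rightarrow> nat" where "EE c i = i + c ! i"

definition pos :: "nat list \<Rightarrow> nat \<Rightarrow> nat \<Rightarrow> nat" where
  "pos c j i = length (filter (\<lambda>i'. j < i' + c ! i') [0..<i])"

lemma sum_fun_apply: "(sum F A) x = sum (\<lambda>a. F a x) A"
proof (cases "finite A")
  case True then show ?thesis by (induction A rule: finite_induct) auto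
next
  case False then show ?thesis by simp
qed

lemma sum_lessThan_double: "(\<Sum>t<(a::nat) + b. (g t :: 'a::comm_monoid_add)) = (\<Sum>t<a. g t) + (\<Sum>t<b. g (a + t))"
  by (induction b) (auto simp: add.assoc)

definition Tset :: "nat list \<Rightarrow> nat set" where
  "Tset c = {j. j < length c \<and> (\<exists>i<j. j < EE c i \<and> Suc i < length c \<and> c ! i \<le> c ! Suc i)}"

locale KC =
  fixes c :: "nat list" and n :: nat
  assumes kup: "kupisch c" and len: "length c = Suc n"
begin

lemma c_ge2': "i < n \<Longrightarrow> 2 \<le> c ! i"
  using kup len by (auto simp: kupisch_def)

lemma c_step': "i < n \<Longrightarrow> c ! i \<le> c ! Suc i + 1"
  using kup len by (auto simp: kupisch_def)

lemma c_last': "c ! n = 1"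
  using kup len by (auto simp: kupisch_def)

lemma E_mono': "i \<le> j \<Longrightarrow> j \<le> n \<Longrightarrow> EE c i \<le> EE c j"
proof (induction j)
  case 0 then show ?case by simp
next
  case (Suc j)
  have "EE c j \<le> EE c (Suc j)" using c_step'[of j] Suc(3) by (auto simp: EE_def)
  then show ?case using Suc by (cases "i = Suc j") auto
qed

lemma E_le': "i \<le> n \<Longrightarrow> EE c i \<le> Suc n"
  using E_mono'[of i n] c_last' by (simp add: EE_def)

lemma R_iff: "i \<in> set (rad_idx c j) \<longleftrightarrow> i < j \<and> j < EE c i"
  by (auto simp: rad_idx_def EE_def)

lemma R_distinct: "distinct (rad_idx c j)"
  by (simp add: rad_idx_def)

lemma idx_mem: "s < length (rad_idx c j) \<Longrightarrow> rad_idx c j ! s < j \<and> j < EE c (rad_idx c j ! s)"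
  using R_iff nth_mem by blast

lemma pos_props:
  assumes "i < j" "j < EE c i"
  shows "pos c j i < length (rad_idx c j) \<and> rad_idx c j ! pos c j i = i"
proof -
  have up: "[0..<j] = [0..<i] @ i # [Suc i..<j]"
    using assms by (metis le_add1 le_add_same_cancel1 less_imp_add_positive upt_add_eq_append upt_conv_Cons zero_less_iff_neq_zero)
  have "rad_idx c j = filter (\<lambda>i'. j < i' + c ! i') [0..<i] @ i # filter (\<lambda>i'. j < i' + c ! i') [Suc i..<j]"
    unfolding rad_idx_def using assms by (subst up) (simp add: EE_def)
  then show ?thesis unfolding pos_def by (simp add: nth_append)
qed

lemma pos_idx: "s < length (rad_idx c j) \<Longrightarrow> pos c j (rad_idx c j ! s) = s"
proof -
  assume s: "s < length (rad_idx c j)"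
  let ?i = "rad_idx c j ! s"
  have "?i < j" "j < EE c ?i" using idx_mem[OF s] by auto
  from pos_props[OF this] have "pos c j ?i < length (rad_idx c j)" "rad_idx c j ! pos c j ?i = ?i"
    by auto
  then show ?thesis using nth_eq_iff_index_eq[OF R_distinct] s by blast
qed

lemma sum_idx:
  "(\<Sum>t<length (rad_idx c j). if rad_idx c j ! t = i then g t else 0) =
     (if i < j \<and> j < EE c i then g (pos c j i) else 0)"
proof (cases "i < j \<and> j < EE c i")
  case True
  note pp = pos_props[of i j] True
  have "(\<Sum>t<length (rad_idx c j). if rad_idx c j ! t = i then g t else 0) =
        (\<Sum>t<length (rad_idx c j). if t = pos c j i then g t else 0)"
  proof (rule sum.cong[OF refl])
    fix t assume "t \<in> {..<length (rad_idx c j)}"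
    then have "rad_idx c j ! t = i \<longleftrightarrow> t = pos c j i"
      using pp pos_idx by auto
    then show "(if rad_idx c j ! t = i then g t else 0) = (if t = pos c j i then g t else 0)" by simp
  qed
  also have "\<dots> = g (pos c j i)" using pp by (simp add: sum.delta)
  finally show ?thesis using True by simp
next
  case False
  have ne: "rad_idx c j ! t \<noteq> i" if "t < length (rad_idx c j)" for t
    using idx_mem[OF that] False by auto
  have "(\<Sum>t<length (rad_idx c j). if rad_idx c j ! t = i then g t else 0) = 0"
    by (rule sum.neutral) (use ne in auto)
  then show ?thesis unfolding if_not_P[OF False] .
qed

abbreviation (input) dd where "dd \<equiv> rad_dim c"

lemma dd_eq: "j < Suc n \<Longrightarrow> rad_dim c j = length (rad_idx c j)"
  using len by (simp add: rad_dim_def)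

lemma dd_lt_iff: "s < rad_dim c j \<longleftrightarrow> j < Suc n \<and> s < length (rad_idx c j)"
  using len by (simp add: rad_dim_def)

lemma mult_left:
  assumes "Suc j < Suc n" "r < rad_dim c (Suc j)"
  shows "mcomp (rad_map c j :: nat \<Rightarrow> nat \<Rightarrow> 'k::field) X (rad_dim c j) r s =
    (if rad_idx c (Suc j) ! r < j then X (pos c j (rad_idx c (Suc j) ! r)) s else 0)"
proof -
  let ?i = "rad_idx c (Suc j) ! r"
  have r: "r < length (rad_idx c (Suc j))" using assms dd_lt_iff by auto
  have E: "Suc j < EE c ?i" using idx_mem[OF r] by auto
  have "mcomp (rad_map c j :: nat \<Rightarrow> nat \<Rightarrow> 'k) X (rad_dim c j) r s =
      (\<Sum>t<length (rad_idx c j). if rad_idx c j ! t = ?i then X t s else 0)"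
    unfolding mcomp_def using assms
    by (simp add: dd_eq rad_map_def len dd_lt_iff eq_commute[of "rad_idx c (Suc j) ! r"] cong: if_cong)
      (rule sum.cong; simp)
  also have "\<dots> = (if ?i < j \<and> j < EE c ?i then X (pos c j ?i) s else 0)" by (rule sum_idx)
  finally show ?thesis using E by auto
qed

lemma mult_right:
  assumes "Suc j < Suc n" "s < rad_dim c j"
  shows "mcomp X (rad_map c j :: nat \<Rightarrow> nat \<Rightarrow> 'k::field) (rad_dim c (Suc j)) r s =
    (if Suc j < EE c (rad_idx c j ! s) then X r (pos c (Suc j) (rad_idx c j ! s)) else 0)"
proof -
  let ?i = "rad_idx c j ! s"
  have s: "s < length (rad_idx c j)" using assms dd_lt_iff by auto
  have i: "?i < j" using idx_mem[OF s] by auto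
  have "mcomp X (rad_map c j :: nat \<Rightarrow> nat \<Rightarrow> 'k) (rad_dim c (Suc j)) r s =
      (\<Sum>t<length (rad_idx c (Suc j)). if rad_idx c (Suc j) ! t = ?i then X r t else 0)"
    unfolding mcomp_def using assms
    by (simp add: dd_eq rad_map_def len dd_lt_iff cong: if_cong) (rule sum.cong; simp)
  also have "\<dots> = (if ?i < Suc j \<and> Suc j < EE c ?i then X r (pos c (Suc j) ?i) else 0)" by (rule sum_idx)
  finally show ?thesis using i by auto
qed

end

fun Xg :: "(nat \<Rightarrow> nat) \<Rightarrow> (nat \<Rightarrow> nat \<Rightarrow> nat \<Rightarrow> 'k::field) \<Rightarrow> 'k cochain \<Rightarrow> nat \<Rightarrow> nat \<Rightarrow> nat \<Rightarrow> nat \<Rightarrow> 'k" where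
  "Xg d a f k 0 = (\<lambda>r s. 0)"
| "Xg d a f k (Suc l) = (\<lambda>r s. mcomp (a (k + l)) (Xg d a f k l) (d (k + l)) r s
      + mcomp (f (k + l)) (path_map d a k l) (d (k + l)) r s)"

lemma block:
  fixes d :: "nat \<Rightarrow> nat" and a :: "nat \<Rightarrow> nat \<Rightarrow> nat \<Rightarrow> 'k::field" and f :: "'k cochain"
  assumes "r < ext_dim d d (k + l)" "s < ext_dim d d k"
  shows "path_map (ext_dim d d) (ext_map d a d a f) k l r s =
    (if r < d (k + l) then (if s < d k then path_map d a k l r s else Xg d a f k l r (s - d k))
     else (if s < d k then 0 else path_map d a k l (r - d (k + l)) (s - d k)))"
  using assms
proof (induction l arbitrary: r)
  case 0
  then show ?case by (auto simp: ext_dim_def)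
next
  case (Suc l)
  let ?D = "ext_dim d d" and ?A = "ext_map d a d a f"
  let ?dd = "d (k + l)" and ?dd' = "d (Suc (k + l))" and ?dk = "d k"
  let ?PM = "path_map ?D ?A k l" and ?P = "path_map d a k l" and ?X = "Xg d a f k l"
  have PM1: "?PM t s = (if s < ?dk then ?P t s else ?X t (s - ?dk))" if "t < ?dd" for t
  proof -
    have "t < ?D (k + l)" using that by (simp add: ext_dim_def)
    from Suc.IH[OF this Suc.prems(2)] show ?thesis using that by simp
  qed
  have PM2: "?PM (?dd + t) s = (if s < ?dk then 0 else ?P t (s - ?dk))" if "t < ?dd" for t
  proof -
    have "?dd + t < ?D (k + l)" using that by (simp add: ext_dim_def)
    from Suc.IH[OF this Suc.prems(2)] show ?thesis using that by simp
  qed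
  have A1: "?A (k + l) r t = (if r < ?dd' then a (k + l) r t else 0)" if "t < ?dd" for t
    using that by (simp add: ext_map_def)
  have A2: "?A (k + l) r (?dd + t) = (if r < ?dd' then f (k + l) r t else a (k + l) (r - ?dd') t)" for t
    by (simp add: ext_map_def)
  have "path_map ?D ?A k (Suc l) r s = (\<Sum>t<?dd + ?dd. ?A (k + l) r t * ?PM t s)"
    by (simp add: mcomp_def ext_dim_def)
  also have "\<dots> = (\<Sum>t<?dd. ?A (k + l) r t * ?PM t s) + (\<Sum>t<?dd. ?A (k + l) r (?dd + t) * ?PM (?dd + t) s)"
    by (rule sum_lessThan_double)
  also have "(\<Sum>t<?dd. ?A (k + l) r t * ?PM t s) =
      (\<Sum>t<?dd. (if r < ?dd' then a (k + l) r t else 0) * (if s < ?dk then ?P t s else ?X t (s - ?dk)))"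
    by (rule sum.cong[OF refl]) (simp add: PM1 A1)
  also have "(\<Sum>t<?dd. ?A (k + l) r (?dd + t) * ?PM (?dd + t) s) =
      (\<Sum>t<?dd. (if r < ?dd' then f (k + l) r t else a (k + l) (r - ?dd') t) * (if s < ?dk then 0 else ?P t (s - ?dk)))"
    by (rule sum.cong[OF refl]) (simp add: PM2 A2)
  finally have eq: "path_map ?D ?A k (Suc l) r s = 
      (\<Sum>t<?dd. (if r < ?dd' then a (k + l) r t else 0) * (if s < ?dk then ?P t s else ?X t (s - ?dk))) +
      (\<Sum>t<?dd. (if r < ?dd' then f (k + l) r t else a (k + l) (r - ?dd') t) * (if s < ?dk then 0 else ?P t (s - ?dk)))" .
  show ?case
    unfolding eq by (cases "r < ?dd'"; cases "s < ?dk") (simp_all add: mcomp_def)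
qed

context KC
begin

lemma P_expl:
  assumes "k + l < Suc n" "r < rad_dim c (k + l)" "s < rad_dim c k"
  shows "path_map (rad_dim c) (rad_map c :: nat \<Rightarrow> nat \<Rightarrow> nat \<Rightarrow> 'k::field) k l r s =
    (if rad_idx c (k + l) ! r = rad_idx c k ! s then 1 else 0)"
  using assms
proof (induction l arbitrary: r)
  case 0
  have "r < length (rad_idx c k)" "s < length (rad_idx c k)" using 0 dd_lt_iff by auto
  then show ?case using nth_eq_iff_index_eq[OF R_distinct] by simp
next
  case (Suc l)
  let ?i' = "rad_idx c (Suc (k + l)) ! r"
  have r: "r < length (rad_idx c (Suc (k + l)))" using Suc.prems dd_lt_iff by auto
  have i': "?i' < Suc (k + l)" "Suc (k + l) < EE c ?i'" using idx_mem[OF r] by auto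
  have s: "s < length (rad_idx c k)" using Suc.prems dd_lt_iff by auto
  have i: "rad_idx c k ! s < k" using idx_mem[OF s] by auto
  have "path_map (rad_dim c) (rad_map c :: nat \<Rightarrow> nat \<Rightarrow> nat \<Rightarrow> 'k) k (Suc l) r s =
     mcomp (rad_map c (k + l)) (path_map (rad_dim c) (rad_map c :: nat \<Rightarrow> nat \<Rightarrow> nat \<Rightarrow> 'k) k l) (rad_dim c (k + l)) r s"
    by simp
  also have "\<dots> = (if ?i' < k + l then path_map (rad_dim c) (rad_map c :: nat \<Rightarrow> nat \<Rightarrow> nat \<Rightarrow> 'k) k l (pos c (k + l) ?i') s else 0)"
    by (rule mult_left) (use Suc.prems in auto)
  also have "\<dots> = (if ?i' = rad_idx c k ! s then 1 else 0)"
  proof (cases "?i' < k + l")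
    case True
    have pp: "pos c (k + l) ?i' < length (rad_idx c (k + l))" "rad_idx c (k + l) ! pos c (k + l) ?i' = ?i'"
      using pos_props[of ?i' "k + l"] True i' by auto
    then have "pos c (k + l) ?i' < rad_dim c (k + l)" using dd_lt_iff Suc.prems by auto
    then show ?thesis using Suc.IH[of "pos c (k + l) ?i'"] Suc.prems pp True by auto
  next
    case False
    then show ?thesis using i by auto
  qed
  finally show ?case by simp
qed

lemma P_zero:
  assumes "k + c ! k < Suc n" "r < rad_dim c (k + c ! k)" "s < rad_dim c k"
  shows "path_map (rad_dim c) (rad_map c :: nat \<Rightarrow> nat \<Rightarrow> nat \<Rightarrow> 'k::field) k (c ! k) r s = 0"
proof -
  have r: "r < length (rad_idx c (k + c ! k))" and s: "s < length (rad_idx c k)"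
    using assms dd_lt_iff by auto
  have "rad_idx c k ! s < k" using idx_mem[OF s] by auto
  then have "EE c (rad_idx c k ! s) \<le> EE c k" using E_mono' assms by auto
  moreover have "EE c k < EE c (rad_idx c (k + c ! k) ! r)" using idx_mem[OF r] by (simp add: EE_def)
  ultimately have "rad_idx c (k + c ! k) ! r \<noteq> rad_idx c k ! s" by auto
  then show ?thesis using P_expl[OF assms] by simp
qed

lemma X_expl:
  fixes f :: "'k::field cochain"
  assumes "k + l < Suc n" "i' < k + l" "k + l < EE c i'" "i < k" "k < EE c i"
  shows "Xg (rad_dim c) (rad_map c) f k l (pos c (k + l) i') (pos c k i) =
    (\<Sum>t \<in> {t. k \<le> t \<and> t < k + l \<and> i' \<le> t \<and> t < EE c i}. f t (pos c (Suc t) i') (pos c t i))"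
  using assms
proof (induction l arbitrary: i')
  case 0
  have e: "{t. k \<le> t \<and> t < k \<and> i' \<le> t \<and> t < EE c i} = {}" by auto
  show ?case by (simp only: add_0_right e sum.empty Xg.simps)
next
  case (Suc l)
  let ?r = "pos c (Suc (k + l)) i'" and ?s = "pos c k i"
  let ?S = "{t. k \<le> t \<and> t < k + l \<and> i' \<le> t \<and> t < EE c i}"
  have ppr: "?r < length (rad_idx c (Suc (k + l)))" "rad_idx c (Suc (k + l)) ! ?r = i'"
    using pos_props[of i' "Suc (k + l)"] Suc.prems by auto
  have pps: "?s < length (rad_idx c k)" "rad_idx c k ! ?s = i"
    using pos_props[of i k] Suc.prems by auto
  have r: "?r < rad_dim c (Suc (k + l))" using ppr Suc.prems dd_lt_iff by auto
  have s: "?s < rad_dim c k" using pps Suc.prems dd_lt_iff by auto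
  have "Xg (rad_dim c) (rad_map c) f k (Suc l) ?r ?s =
      mcomp (rad_map c (k + l)) (Xg (rad_dim c) (rad_map c) f k l) (rad_dim c (k + l)) ?r ?s
    + mcomp (f (k + l)) (path_map (rad_dim c) (rad_map c) k l) (rad_dim c (k + l)) ?r ?s"
    by simp
  also have "mcomp (rad_map c (k + l)) (Xg (rad_dim c) (rad_map c) f k l) (rad_dim c (k + l)) ?r ?s
      = (if i' < k + l then (\<Sum>t\<in>?S. f t (pos c (Suc t) i') (pos c t i)) else 0)"
  proof -
    have "mcomp (rad_map c (k + l)) (Xg (rad_dim c) (rad_map c) f k l) (rad_dim c (k + l)) ?r ?s
      = (if i' < k + l then Xg (rad_dim c) (rad_map c) f k l (pos c (k + l) i') ?s else 0)"
      using mult_left[of "k + l" ?r "Xg (rad_dim c) (rad_map c) f k l" ?s] Suc.prems r ppr by simp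
    also have "\<dots> = (if i' < k + l then (\<Sum>t\<in>?S. f t (pos c (Suc t) i') (pos c t i)) else 0)"
      using Suc.IH[of i'] Suc.prems by auto
    finally show ?thesis .
  qed
  also have "mcomp (f (k + l)) (path_map (rad_dim c) (rad_map c) k l) (rad_dim c (k + l)) ?r ?s
      = (if k + l < EE c i then f (k + l) ?r (pos c (k + l) i) else 0)"
  proof -
    have "mcomp (f (k + l)) (path_map (rad_dim c) (rad_map c) k l) (rad_dim c (k + l)) ?r ?s
        = (\<Sum>t<length (rad_idx c (k + l)). if rad_idx c (k + l) ! t = i then f (k + l) ?r t else 0)"
      unfolding mcomp_def
    proof -
      have eqd: "rad_dim c (k + l) = length (rad_idx c (k + l))" using dd_eq Suc.prems by auto
      show "(\<Sum>t<rad_dim c (k + l). f (k + l) ?r t * path_map (rad_dim c) (rad_map c) k l t ?s)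
          = (\<Sum>t<length (rad_idx c (k + l)). if rad_idx c (k + l) ! t = i then f (k + l) ?r t else 0)"
        unfolding eqd
      proof (rule sum.cong[OF refl])
        fix t assume "t \<in> {..<length (rad_idx c (k + l))}"
        then have "t < rad_dim c (k + l)" using eqd by auto
        then have "path_map (rad_dim c) (rad_map c) k l t ?s = (if rad_idx c (k + l) ! t = i then 1 else (0::'k))"
          using P_expl[of k l t ?s] Suc.prems s pps by auto
        then show "f (k + l) ?r t * path_map (rad_dim c) (rad_map c) k l t ?s
            = (if rad_idx c (k + l) ! t = i then f (k + l) ?r t else 0)" by simp
      qed
    qed
    also have "\<dots> = (if i < k + l \<and> k + l < EE c i then f (k + l) ?r (pos c (k + l) i) else 0)"
      by (rule sum_idx)
    finally show ?thesis using Suc.prems by auto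
  qed
  also have "(if i' < k + l then (\<Sum>t\<in>?S. f t (pos c (Suc t) i') (pos c t i)) else 0)
      + (if k + l < EE c i then f (k + l) ?r (pos c (k + l) i) else 0)
      = (\<Sum>t \<in> {t. k \<le> t \<and> t < k + Suc l \<and> i' \<le> t \<and> t < EE c i}. f t (pos c (Suc t) i') (pos c t i))"
  proof -
    have finS: "finite ?S" by (rule finite_subset[of _ "{..<k + l}"]) auto
    have S0: "\<not> i' < k + l \<Longrightarrow> ?S = {}" by auto
    have A: "(if i' < k + l then (\<Sum>t\<in>?S. f t (pos c (Suc t) i') (pos c t i)) else 0)
        = (\<Sum>t\<in>?S. f t (pos c (Suc t) i') (pos c t i))"
    proof (cases "i' < k + l")
      case False
      then have e: "?S = {}" by (rule S0)
      show ?thesis unfolding e using False by simp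
    qed simp
    show ?thesis
    proof (cases "k + l < EE c i")
      case True
      have "{t. k \<le> t \<and> t < k + Suc l \<and> i' \<le> t \<and> t < EE c i} = insert (k + l) ?S"
        using True Suc.prems by auto
      then show ?thesis unfolding A using True finS by simp
    next
      case False
      have "{t. k \<le> t \<and> t < k + Suc l \<and> i' \<le> t \<and> t < EE c i} = ?S"
        using False by auto
      then show ?thesis unfolding A using False by simp
    qed
  qed
  finally show ?case by simp
qed

abbreviation JD :: "nat \<Rightarrow> nat" where "JD \<equiv> rad_dim c"

definition Fc :: "'k::field cochain \<Rightarrow> nat \<Rightarrow> nat \<Rightarrow> nat \<Rightarrow> 'k" where
  "Fc f t i' i = f t (pos c (Suc t) i') (pos c t i)"

definition Ssum :: "'k::field cochain \<Rightarrow> nat \<Rightarrow> nat \<Rightarrow> 'k" where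
  "Ssum f i' i = (\<Sum>t \<in> {i'..<EE c i}. Fc f t i' i)"

lemma constr_facts:
  assumes "k < Suc n" "i < k" "k < EE c i" "i' < EE c k" "EE c k < EE c i'"
  shows "k \<le> i' \<and> EE c i \<le> EE c k"
proof -
  have "EE c i \<le> EE c k" using E_mono'[of i k] assms by auto
  moreover have "k \<le> i'"
  proof (rule ccontr)
    assume "\<not> k \<le> i'"
    then have "EE c i' \<le> EE c k" using E_mono'[of i' k] assms by auto
    then show False using assms by auto
  qed
  ultimately show ?thesis by auto
qed

lemma Zk:
  fixes f :: "'k::field cochain"
  assumes k: "k < Suc n" "EE c k < Suc n"
  shows "(\<forall>r s. r < ext_dim JD JD (k + c ! k) \<and> s < ext_dim JD JD k \<longrightarrow>
            path_map (ext_dim JD JD) (ext_map JD (rad_map c) JD (rad_map c) f) k (c ! k) r s = 0)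
     \<longleftrightarrow> (\<forall>i i'. i < k \<and> k < EE c i \<and> i' < EE c k \<and> EE c k < EE c i' \<longrightarrow> Ssum f i' i = 0)"
proof -
  have kc: "k + c ! k = EE c k" by (simp add: EE_def)
  have setq: "{t. k \<le> t \<and> t < k + c ! k \<and> i' \<le> t \<and> t < EE c i} = {i'..<EE c i}"
    if "i < k" "k < EE c i" "i' < EE c k" "EE c k < EE c i'" for i i'
  proof -
    have cf: "k \<le> i' \<and> EE c i \<le> EE c k" by (rule constr_facts) (use that k in auto)
    then show ?thesis using that by (auto simp: kc)
  qed
  have Xs: "Xg JD (rad_map c) f k (c ! k) (pos c (EE c k) i') (pos c k i) = Ssum f i' i"
    if "i < k" "k < EE c i" "i' < EE c k" "EE c k < EE c i'" for i i'
    using X_expl[of k "c ! k" i' i f] that k setq[OF that] by (simp add: kc Ssum_def Fc_def)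
  show ?thesis
  proof
    assume H: "\<forall>r s. r < ext_dim JD JD (k + c ! k) \<and> s < ext_dim JD JD k \<longrightarrow>
            path_map (ext_dim JD JD) (ext_map JD (rad_map c) JD (rad_map c) f) k (c ! k) r s = 0"
    show "\<forall>i i'. i < k \<and> k < EE c i \<and> i' < EE c k \<and> EE c k < EE c i' \<longrightarrow> Ssum f i' i = 0"
    proof (intro allI impI)
      fix i i' assume ii: "i < k \<and> k < EE c i \<and> i' < EE c k \<and> EE c k < EE c i'"
      let ?r = "pos c (EE c k) i'" and ?s = "pos c k i"
      have r: "?r < JD (EE c k)" using pos_props[of i' "EE c k"] ii k dd_lt_iff by auto
      have s: "?s < JD k" using pos_props[of i k] ii k dd_lt_iff by auto
      have "path_map (ext_dim JD JD) (ext_map JD (rad_map c) JD (rad_map c) f) k (c ! k) ?r (JD k + ?s) = 0"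
        using H r s by (auto simp: ext_dim_def kc)
      moreover have "path_map (ext_dim JD JD) (ext_map JD (rad_map c) JD (rad_map c) f) k (c ! k) ?r (JD k + ?s)
          = Xg JD (rad_map c) f k (c ! k) ?r ?s"
        using block[of ?r JD k "c ! k" "JD k + ?s" "rad_map c" f] r s by (simp add: ext_dim_def kc)
      ultimately show "Ssum f i' i = 0" using Xs ii by auto
    qed
  next
    assume H: "\<forall>i i'. i < k \<and> k < EE c i \<and> i' < EE c k \<and> EE c k < EE c i' \<longrightarrow> Ssum f i' i = 0"
    show "\<forall>r s. r < ext_dim JD JD (k + c ! k) \<and> s < ext_dim JD JD k \<longrightarrow>
            path_map (ext_dim JD JD) (ext_map JD (rad_map c) JD (rad_map c) f) k (c ! k) r s = 0"
    proof (intro allI impI)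
      fix r s assume rs: "r < ext_dim JD JD (k + c ! k) \<and> s < ext_dim JD JD k"
      have kcn: "k + c ! k < Suc n" using k kc by simp
      have X0: "Xg JD (rad_map c) f k (c ! k) r' s' = 0" if "r' < JD (EE c k)" "s' < JD k" for r' s'
      proof -
        have r': "r' < length (rad_idx c (EE c k))" and s': "s' < length (rad_idx c k)"
          using that dd_lt_iff by auto
        let ?i' = "rad_idx c (EE c k) ! r'" and ?i = "rad_idx c k ! s'"
        have ii: "?i < k" "k < EE c ?i" "?i' < EE c k" "EE c k < EE c ?i'"
          using idx_mem[OF r'] idx_mem[OF s'] by auto
        have "Xg JD (rad_map c) f k (c ! k) r' s' = Ssum f ?i' ?i"
          using Xs[OF ii] pos_idx[OF r'] pos_idx[OF s'] by simp
        then show ?thesis using H ii by auto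
      qed
      show "path_map (ext_dim JD JD) (ext_map JD (rad_map c) JD (rad_map c) f) k (c ! k) r s = 0"
        using block[of r JD k "c ! k" s "rad_map c" f] rs P_zero[OF kcn] X0 kc
        by (auto simp: ext_dim_def)
    qed
  qed
qed

lemma Zchar:
  fixes f :: "'k::field cochain"
  shows "is_module c (ext_dim JD JD) (ext_map JD (rad_map c) JD (rad_map c) f) \<longleftrightarrow>
    (\<forall>k i i'. k < Suc n \<and> EE c k < Suc n \<and> i < k \<and> k < EE c i \<and> i' < EE c k \<and> EE c k < EE c i'
       \<longrightarrow> Ssum f i' i = 0)"
proof -
  have "is_module c (ext_dim JD JD) (ext_map JD (rad_map c) JD (rad_map c) f) \<longleftrightarrow>
    (\<forall>k. k < Suc n \<and> EE c k < Suc n \<longrightarrow> (\<forall>r s. r < ext_dim JD JD (k + c ! k) \<and> s < ext_dim JD JD k \<longrightarrow>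
            path_map (ext_dim JD JD) (ext_map JD (rad_map c) JD (rad_map c) f) k (c ! k) r s = 0))"
    unfolding is_module_def using len by (auto simp: EE_def)
  also have "\<dots> \<longleftrightarrow> (\<forall>k. k < Suc n \<and> EE c k < Suc n \<longrightarrow>
      (\<forall>i i'. i < k \<and> k < EE c i \<and> i' < EE c k \<and> EE c k < EE c i' \<longrightarrow> Ssum f i' i = 0))"
    using Zk by blast
  finally show ?thesis by blast
qed

lemma telescope:
  fixes G :: "nat \<Rightarrow> 'k::ab_group_add"
  assumes "a < e"
  shows "(\<Sum>t\<in>{a..<e}. (if a < t then G t else 0) - (if Suc t < e then G (Suc t) else 0)) = 0"
proof -
  obtain e' where e: "e = Suc e'" using assms by (cases e) auto
  have ae: "a \<le> e'" using assms e by auto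
  have 1: "(\<Sum>t\<in>{a..<e}. (if a < t then G t else 0)) = (\<Sum>t\<in>{Suc a..<e}. G t)"
    using assms by (simp add: sum.atLeast_Suc_lessThan)
  have 2: "(\<Sum>t\<in>{a..<e}. (if Suc t < e then G (Suc t) else 0)) = (\<Sum>t\<in>{a..<e'}. G (Suc t))"
    using ae unfolding e by (simp add: sum.atLeastLessThan_Suc)
  have 3: "(\<Sum>t\<in>{a..<e'}. G (Suc t)) = (\<Sum>t\<in>{Suc a..<e}. G t)"
    unfolding e by (rule sum.shift_bounds_Suc_ivl[symmetric])
  show ?thesis using 1 2 3 by (simp add: sum_subtractf)
qed

lemma pos_inj:
  assumes "i1 < j" "j < EE c i1" "i2 < j" "j < EE c i2" "pos c j i1 = pos c j i2"
  shows "i1 = i2"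
  using pos_props[of i1 j] pos_props[of i2 j] assms by metis

lemma cob_entry:
  fixes g :: "'k::field cochain"
  assumes t: "Suc t < Suc n" and r: "r < JD (Suc t)" and s: "s < JD t"
  shows "mcomp (rad_map c t) (g t) (JD t) r s - mcomp (g (Suc t)) (rad_map c t) (JD (Suc t)) r s
    = (if rad_idx c (Suc t) ! r < t then g t (pos c t (rad_idx c (Suc t) ! r)) s else 0)
    - (if Suc t < EE c (rad_idx c t ! s) then g (Suc t) r (pos c (Suc t) (rad_idx c t ! s)) else 0)"
  using mult_left[OF t r, of "g t" s] mult_right[OF t s, of "g (Suc t)" r] by simp

definition cob :: "'k::field cochain \<Rightarrow> 'k cochain" where
  "cob g = (\<lambda>j r s. if Suc j < Suc n \<and> r < JD (Suc j) \<and> s < JD j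
     then mcomp (rad_map c j) (g j) (JD j) r s - mcomp (g (Suc j)) (rad_map c j) (JD (Suc j)) r s else 0)"

lemma Fc_cob:
  fixes g :: "'k::field cochain"
  assumes "i' \<le> t" "Suc t < EE c i'" "i < t" "t < EE c i" "Suc t < Suc n"
  shows "Fc (cob g) t i' i = (if i' < t then g t (pos c t i') (pos c t i) else 0)
     - (if Suc t < EE c i then g (Suc t) (pos c (Suc t) i') (pos c (Suc t) i) else 0)"
proof -
  have pr: "pos c (Suc t) i' < length (rad_idx c (Suc t))" "rad_idx c (Suc t) ! pos c (Suc t) i' = i'"
    using pos_props[of i' "Suc t"] assms by auto
  have ps: "pos c t i < length (rad_idx c t)" "rad_idx c t ! pos c t i = i"
    using pos_props[of i t] assms by auto
  have r: "pos c (Suc t) i' < JD (Suc t)" and s: "pos c t i < JD t" using pr ps assms dd_lt_iff by auto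
  show ?thesis unfolding Fc_def cob_def using cob_entry[OF assms(5) r s, of g] assms r s pr ps by simp
qed

lemma Ssum_cob:
  fixes g :: "'k::field cochain"
  assumes "i < i'" "EE c i < EE c i'" "EE c i' \<le> Suc n"
  shows "Ssum (cob g) i' i = 0"
proof (cases "i' < EE c i")
  case False
  then show ?thesis by (simp add: Ssum_def)
next
  case True
  let ?G = "\<lambda>t. g t (pos c t i') (pos c t i)"
  have "Ssum (cob g) i' i = (\<Sum>t\<in>{i'..<EE c i}. (if i' < t then ?G t else 0) - (if Suc t < EE c i then ?G (Suc t) else 0))"
    unfolding Ssum_def
  proof (rule sum.cong[OF refl])
    fix t assume "t \<in> {i'..<EE c i}"
    then have "i' \<le> t" "Suc t < EE c i'" "i < t" "t < EE c i" "Suc t < Suc n" using assms by auto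
    then show "Fc (cob g) t i' i = (if i' < t then ?G t else 0) - (if Suc t < EE c i then ?G (Suc t) else 0)"
      by (rule Fc_cob)
  qed
  also have "\<dots> = 0" by (rule telescope[OF True])
  finally show ?thesis .
qed

lemma Ssum_add: "Ssum (f + g) i' i = Ssum f i' i + Ssum g i' i"
  by (simp add: Ssum_def Fc_def sum.distrib)

lemma Ssum_diff: "Ssum (f - g) i' i = Ssum f i' i - Ssum g i' i"
  by (simp add: Ssum_def Fc_def sum_subtractf)

lemma Ssum_scale: "Ssum (cscale x f) i' i = x * Ssum f i' i"
  by (simp add: Ssum_def Fc_def cscale_def sum_distrib_left)

lemma Ssum_sum: "Ssum (sum F A) i' i = (\<Sum>q\<in>A. Ssum (F q) i' i)"
  unfolding Ssum_def Fc_def sum_fun_apply by (rule sum.swap)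

definition Qset :: "(nat \<times> nat) set" where
  "Qset = {(i', i). i < i' \<and> i' < EE c i \<and> EE c i < EE c i' \<and> i' < Suc n \<and> EE c (Suc i) = EE c i'}"

definition wv :: "nat \<times> nat \<Rightarrow> 'k::field cochain" where
  "wv q = (\<lambda>t r s. if t = EE c (snd q) - 1 \<and> r = pos c (EE c (snd q)) (fst q)
        \<and> s = pos c (EE c (snd q) - 1) (snd q) then 1 else 0)"

lemma Q_facts:
  assumes "(i', i) \<in> Qset"
  shows "i < i'" "i' < EE c i" "EE c i < EE c i'" "i' < Suc n" "EE c (Suc i) = EE c i'"
    "i < n" "Suc i < EE c i" "EE c i' \<le> Suc n" "EE c i < Suc n"
proof -
  show q: "i < i'" "i' < EE c i" "EE c i < EE c i'" "i' < Suc n" "EE c (Suc i) = EE c i'"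
    using assms by (auto simp: Qset_def)
  then show "i < n" by auto
  then show "Suc i < EE c i" using c_ge2'[of i] by (auto simp: EE_def)
  show "EE c i' \<le> Suc n" using E_le' q by auto
  then show "EE c i < Suc n" using q by auto
qed

lemma Fc_wv:
  assumes q: "q \<in> Qset" and t: "i0' \<le> t" "Suc t < EE c i0'" "i0 < t" "t < EE c i0"
  shows "Fc (wv q :: 'k::field cochain) t i0' i0 = (if q = (i0', i0) \<and> t = EE c i0 - 1 then 1 else 0)"
proof -
  obtain i' i where qq: "q = (i', i)" by (cases q)
  note f = Q_facts[OF q[unfolded qq]]
  show ?thesis
  proof (cases "t = EE c i - 1 \<and> pos c (Suc t) i0' = pos c (EE c i) i' \<and> pos c t i0 = pos c (EE c i - 1) i")
    case True
    then have st: "Suc t = EE c i" using f by auto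
    have "i0' = i'" using pos_inj[of i0' "Suc t" i'] True t f st by auto
    moreover have "i0 = i" using pos_inj[of i0 t i] True t f st by auto
    moreover have "Suc (EE c i - 1) = EE c i" using f by auto
    ultimately show ?thesis using True qq by (simp add: Fc_def wv_def)
  next
    case False
    have "Suc (EE c i - 1) = EE c i" using f by auto
    then show ?thesis using False qq by (auto simp: Fc_def wv_def)
  qed
qed

abbreviation Cset :: "'k::field cochain set" where
  "Cset \<equiv> cochains1 (length c) JD JD"

abbreviation Zset :: "'k::field cochain set" where
  "Zset \<equiv> ext_cocycles c JD (rad_map c) JD (rad_map c)"

abbreviation Bset :: "'k::field cochain set" where
  "Bset \<equiv> ext_coboundaries c JD (rad_map c) JD (rad_map c)"

definition constr :: "'k::field cochain \<Rightarrow> bool" where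
  "constr f \<longleftrightarrow> (\<forall>k i i'. k < Suc n \<and> EE c k < Suc n \<and> i < k \<and> k < EE c i \<and> i' < EE c k \<and> EE c k < EE c i'
       \<longrightarrow> Ssum f i' i = 0)"

lemma Z_iff: "f \<in> Zset \<longleftrightarrow> f \<in> Cset \<and> constr f"
  unfolding ext_cocycles_def constr_def using Zchar by blast

lemma B_iff: "f \<in> Bset \<longleftrightarrow> (\<exists>g. (\<forall>j r s. g j r s \<noteq> 0 \<longrightarrow> j < Suc n \<and> r < JD j \<and> s < JD j) \<and> f = cob g)"
  unfolding ext_coboundaries_def cob_def using len by auto

lemma cob_C: "cob g \<in> Cset"
  unfolding cochains1_def cob_def using len by auto

lemma cob_constr: "constr (cob g)"
  unfolding constr_def
proof (intro allI impI)
  fix k i i' assume H: "k < Suc n \<and> EE c k < Suc n \<and> i < k \<and> k < EE c i \<and> i' < EE c k \<and> EE c k < EE c i'"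
  have cf: "k \<le> i' \<and> EE c i \<le> EE c k" by (rule constr_facts) (use H in auto)
  have "EE c i' \<le> Suc n" using E_le'[of i'] H by auto
  then show "Ssum (cob g) i' i = 0" using Ssum_cob[of i i' g] H cf by auto
qed

lemma B_sub_Z: "(Bset :: 'k::field cochain set) \<subseteq> Zset"
proof
  fix f :: "'k cochain" assume "f \<in> Bset"
  then obtain g where "f = cob g" using B_iff by blast
  then show "f \<in> Zset" using Z_iff[of "cob g"] cob_C[of g] cob_constr[of g] by simp
qed

lemma wv_C: "q \<in> Qset \<Longrightarrow> wv q \<in> Cset"
proof -
  assume q: "q \<in> Qset"
  obtain i' i where qq: "q = (i', i)" by (cases q)
  note f = Q_facts[OF q[unfolded qq]]
  have "pos c (EE c i) i' < length (rad_idx c (EE c i))" using pos_props[of i' "EE c i"] f by auto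
  moreover have "pos c (EE c i - 1) i < length (rad_idx c (EE c i - 1))"
    using pos_props[of i "EE c i - 1"] f by auto
  moreover have "Suc (EE c i - 1) = EE c i" using f by auto
  ultimately show ?thesis unfolding cochains1_def wv_def qq using f len dd_lt_iff by auto
qed

lemma wv_constr: "q \<in> Qset \<Longrightarrow> constr (wv q :: 'k::field cochain)"
  unfolding constr_def
proof (intro allI impI)
  fix k i0 i0' assume q: "q \<in> Qset" and H: "k < Suc n \<and> EE c k < Suc n \<and> i0 < k \<and> k < EE c i0 \<and> i0' < EE c k \<and> EE c k < EE c i0'"
  have cf: "k \<le> i0' \<and> EE c i0 \<le> EE c k" by (rule constr_facts) (use H in auto)
  have ne: "q \<noteq> (i0', i0)"
  proof
    assume "q = (i0', i0)"
    then have "EE c (Suc i0) = EE c i0'" using q by (auto simp: Qset_def)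
    moreover have "EE c (Suc i0) \<le> EE c k" using E_mono'[of "Suc i0" k] H by auto
    ultimately show False using H by auto
  qed
  have "Ssum (wv q :: 'k cochain) i0' i0 = (\<Sum>t\<in>{i0'..<EE c i0}. (0::'k))"
    unfolding Ssum_def
  proof (rule sum.cong[OF refl])
    fix t assume "t \<in> {i0'..<EE c i0}"
    then have "i0' \<le> t" "Suc t < EE c i0'" "i0 < t" "t < EE c i0" using H cf by auto
    from Fc_wv[OF q this] ne show "Fc (wv q :: 'k cochain) t i0' i0 = 0" by simp
  qed
  then show "Ssum (wv q :: 'k cochain) i0' i0 = 0" by simp
qed

lemma wv_Z: "q \<in> Qset \<Longrightarrow> (wv q :: 'k::field cochain) \<in> Zset"
  using Z_iff wv_C wv_constr by blast

lemma sigma_w: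
  assumes q: "q \<in> Qset" and q': "q' \<in> Qset"
  shows "Ssum (wv q' :: 'k::field cochain) (fst q) (snd q) = (if q = q' then 1 else 0)"
proof -
  obtain i' i where qq: "q = (i', i)" by (cases q)
  note f = Q_facts[OF q[unfolded qq]]
  have "Ssum (wv q' :: 'k cochain) i' i = (\<Sum>t\<in>{i'..<EE c i}. if t = EE c i - 1 then (if q' = (i', i) then 1 else 0) else 0)"
    unfolding Ssum_def
  proof (rule sum.cong[OF refl])
    fix t assume "t \<in> {i'..<EE c i}"
    then have "i' \<le> t" "Suc t < EE c i'" "i < t" "t < EE c i" using f by auto
    from Fc_wv[OF q' this] show "Fc (wv q' :: 'k cochain) t i' i = (if t = EE c i - 1 then (if q' = (i', i) then 1 else 0) else 0)"
      by auto
  qed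
  also have "\<dots> = (if q' = (i', i) then 1 else 0)"
  proof -
    have "EE c i - 1 \<in> {i'..<EE c i}" using f by auto
    then show ?thesis by (simp add: sum.delta')
  qed
  finally show ?thesis using qq by auto
qed

lemma sigma_B: "q \<in> Qset \<Longrightarrow> f \<in> Bset \<Longrightarrow> Ssum f (fst q) (snd q) = 0"
proof -
  assume q: "q \<in> Qset" and f: "f \<in> Bset"
  obtain i' i where qq: "q = (i', i)" by (cases q)
  note ff = Q_facts[OF q[unfolded qq]]
  obtain g where "f = cob g" using f B_iff by blast
  then show ?thesis using Ssum_cob[of i i' g] ff qq by auto
qed

definition Gc :: "'k::field cochain \<Rightarrow> nat \<Rightarrow> nat \<Rightarrow> nat \<Rightarrow> 'k" where
  "Gc h t i' i = (if i' \<le> i then (\<Sum>s \<in> {s. t \<le> s \<and> s < EE c i \<and> Suc s < EE c i'}. Fc h s i' i)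
      else - (\<Sum>s \<in> {i'..<t}. Fc h s i' i))"

definition gc :: "'k::field cochain \<Rightarrow> 'k cochain" where
  "gc h = (\<lambda>t r s. if t < Suc n \<and> r < JD t \<and> s < JD t then Gc h t (rad_idx c t ! r) (rad_idx c t ! s) else 0)"

lemma Gc_id:
  fixes h :: "'k::field cochain"
  assumes t: "i' \<le> t" "Suc t < EE c i'" "i < t" "t < EE c i" "Suc t < Suc n"
    and pz: "i < i' \<Longrightarrow> i' < EE c i \<Longrightarrow> EE c i < EE c i' \<Longrightarrow> Ssum h i' i = 0"
  shows "Fc h t i' i = (if i' < t then Gc h t i' i else 0) - (if Suc t < EE c i then Gc h (Suc t) i' i else 0)"
proof (cases "i' \<le> i")
  case True
  let ?U = "\<lambda>x. {s. x \<le> s \<and> s < EE c i \<and> Suc s < EE c i'}"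
  have it: "i' < t" using True t by auto
  show ?thesis
  proof (cases "Suc t < EE c i")
    case True
    have e: "?U t = insert t (?U (Suc t))" using True t by auto
    have fin: "finite (?U (Suc t))" by (rule finite_subset[of _ "{..<EE c i}"]) auto
    show ?thesis unfolding Gc_def using \<open>i' \<le> i\<close> it True e fin by simp
  next
    case False
    have e: "?U t = {t}" using False t by auto
    show ?thesis unfolding Gc_def using \<open>i' \<le> i\<close> it False e by simp
  qed
next
  case False
  show ?thesis
  proof (cases "i' < t")
    case it: True
    show ?thesis
    proof (cases "Suc t < EE c i")
      case True
      show ?thesis unfolding Gc_def using False it True t by (simp add: sum.atLeastLessThan_Suc)
    next
      case nt: False
      then have st: "Suc t = EE c i" using t by auto
      have "Ssum h i' i = 0" by (rule pz) (use False it t st in auto)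
      then have "(\<Sum>s\<in>{i'..<t}. Fc h s i' i) + Fc h t i' i = 0"
        unfolding Ssum_def st[symmetric] using it by (simp add: sum.atLeastLessThan_Suc)
      then show ?thesis unfolding Gc_def using False it nt by (simp add: eq_neg_iff_add_eq_0 add.commute)
    qed
  next
    case nit: False
    then have ti: "i' = t" using t by auto
    show ?thesis
    proof (cases "Suc t < EE c i")
      case True
      show ?thesis unfolding Gc_def using False nit True ti by simp
    next
      case nt: False
      then have st: "Suc t = EE c i" using t by auto
      have "Ssum h i' i = 0" by (rule pz) (use False ti t st in auto)
      then have "Fc h t i' i = 0" unfolding Ssum_def st[symmetric] using ti by simp
      then show ?thesis using nit nt by simp
    qed
  qed
qed

lemma pairzero:
  fixes h :: "'k::field cochain"
  assumes hc: "constr h" and hq: "\<forall>q\<in>Qset. Ssum h (fst q) (snd q) = 0"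
    and p: "i < i'" "i' < EE c i" "EE c i < EE c i'" "i' \<le> n"
  shows "Ssum h i' i = 0"
proof (cases "EE c (Suc i) = EE c i'")
  case True
  then have "(i', i) \<in> Qset" using p by (auto simp: Qset_def)
  then show ?thesis using hq by force
next
  case False
  have le: "EE c (Suc i) \<le> EE c i'" using E_mono'[of "Suc i" i'] p by auto
  have "i < n" using p by auto
  then have si: "Suc i < EE c i" using c_ge2'[of i] by (auto simp: EE_def)
  have "EE c i \<le> EE c (Suc i)" using E_mono'[of i "Suc i"] \<open>i < n\<close> by auto
  have "EE c i' \<le> Suc n" using E_le' p by auto
  have lt: "EE c (Suc i) < EE c i'" using le False by simp
  have c1: "Suc i < Suc n" using \<open>i < n\<close> by simp
  have c2: "EE c (Suc i) < Suc n" using lt \<open>EE c i' \<le> Suc n\<close> by simp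
  have c3: "i' < EE c (Suc i)" using p \<open>EE c i \<le> EE c (Suc i)\<close> by simp
  show ?thesis
    using hc[unfolded constr_def, rule_format, of "Suc i" i i'] c1 c2 c3 si lt by blast
qed

lemma Bchar:
  fixes h :: "'k::field cochain"
  assumes hC: "h \<in> Cset" and hc: "constr h" and hq: "\<forall>q\<in>Qset. Ssum h (fst q) (snd q) = 0"
  shows "h \<in> Bset"
proof -
  have supp: "\<forall>j r s. gc h j r s \<noteq> 0 \<longrightarrow> j < Suc n \<and> r < JD j \<and> s < JD j"
    unfolding gc_def by auto
  have "h = cob (gc h)"
  proof (intro ext)
    fix t r s
    show "h t r s = cob (gc h) t r s"
    proof (cases "Suc t < Suc n \<and> r < JD (Suc t) \<and> s < JD t")
      case False
      then have "h t r s = 0" using hC len unfolding cochains1_def by auto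
      then show ?thesis using False by (auto simp: cob_def)
    next
      case True
      have r: "r < length (rad_idx c (Suc t))" and s: "s < length (rad_idx c t)" using True dd_lt_iff by auto
      define i' where "i' = rad_idx c (Suc t) ! r"
      define i where "i = rad_idx c t ! s"
      have rr: "pos c (Suc t) i' = r" using pos_idx[OF r] i'_def by simp
      have ss: "pos c t i = s" using pos_idx[OF s] i_def by simp
      have tt: "i' \<le> t" "Suc t < EE c i'" "i < t" "t < EE c i" "Suc t < Suc n"
        using idx_mem[OF r] idx_mem[OF s] True i'_def i_def by auto
      have pz: "Ssum h i' i = 0" if "i < i'" "i' < EE c i" "EE c i < EE c i'"
        by (rule pairzero[OF hc hq that]) (use tt in auto)
      have g1: "i' < t \<Longrightarrow> gc h t (pos c t i') (pos c t i) = Gc h t i' i"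
      proof -
        assume "i' < t"
        then have "pos c t i' < length (rad_idx c t)" "rad_idx c t ! pos c t i' = i'"
          using pos_props[of i' t] tt by auto
        moreover have "pos c t i < length (rad_idx c t)" "rad_idx c t ! pos c t i = i"
          using pos_props[of i t] tt by auto
        ultimately show ?thesis unfolding gc_def using tt dd_lt_iff by auto
      qed
      have g2: "Suc t < EE c i \<Longrightarrow> gc h (Suc t) (pos c (Suc t) i') (pos c (Suc t) i) = Gc h (Suc t) i' i"
      proof -
        assume "Suc t < EE c i"
        then have "pos c (Suc t) i < length (rad_idx c (Suc t))" "rad_idx c (Suc t) ! pos c (Suc t) i = i"
          using pos_props[of i "Suc t"] tt by auto
        moreover have "pos c (Suc t) i' < length (rad_idx c (Suc t))" "rad_idx c (Suc t) ! pos c (Suc t) i' = i'"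
          using pos_props[of i' "Suc t"] tt by auto
        ultimately show ?thesis unfolding gc_def using tt dd_lt_iff by auto
      qed
      have "cob (gc h) t r s = Fc (cob (gc h)) t i' i" unfolding Fc_def rr ss ..
      also have "\<dots> = (if i' < t then gc h t (pos c t i') (pos c t i) else 0)
         - (if Suc t < EE c i then gc h (Suc t) (pos c (Suc t) i') (pos c (Suc t) i) else 0)"
        by (rule Fc_cob) (use tt in auto)
      also have "\<dots> = (if i' < t then Gc h t i' i else 0) - (if Suc t < EE c i then Gc h (Suc t) i' i else 0)"
        using g1 g2 by auto
      also have "\<dots> = Fc h t i' i" by (rule Gc_id[symmetric]) (use tt pz in auto)
      also have "\<dots> = h t r s" unfolding Fc_def rr ss ..
      finally show ?thesis ..
    qed
  qed
  then show ?thesis using B_iff supp by blast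
qed

definition unitc :: "nat \<times> nat \<times> nat \<Rightarrow> 'k::field cochain" where
  "unitc x = (\<lambda>t r s. if (t, r, s) = x then 1 else 0)"

definition Idx :: "(nat \<times> nat \<times> nat) set" where
  "Idx = {(t, r, s). t < n \<and> r < JD (Suc t) \<and> s < JD t}"

lemma JD_le: "JD j \<le> j"
proof -
  have "length (rad_idx c j) \<le> j" unfolding rad_idx_def
    using length_filter_le[of _ "[0..<j]"] by simp
  then show ?thesis by (simp add: rad_dim_def)
qed

lemma finite_Idx: "finite Idx"
proof (rule finite_subset)
  show "Idx \<subseteq> {..<n} \<times> {..<Suc n} \<times> {..<n}"
  proof
    fix x assume "x \<in> Idx"
    then obtain t r s where x: "x = (t, r, s)" "t < n" "r < JD (Suc t)" "s < JD t"
      unfolding Idx_def by auto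
    have "JD (Suc t) \<le> Suc t" "JD t \<le> t" by (rule JD_le)+
    then show "x \<in> {..<n} \<times> {..<Suc n} \<times> {..<n}" using x by auto
  qed
qed auto

lemma C_repr:
  assumes f: "(f :: 'k::field cochain) \<in> Cset"
  shows "f = (\<Sum>x\<in>Idx. cscale (f (fst x) (fst (snd x)) (snd (snd x))) (unitc x))"
proof (intro ext)
  fix t r s
  have "(\<Sum>x\<in>Idx. cscale (f (fst x) (fst (snd x)) (snd (snd x))) (unitc x)) t r s
      = (\<Sum>x\<in>Idx. if x = (t, r, s) then f t r s else 0)"
    unfolding sum_fun_apply
    by (rule sum.cong[OF refl]) (auto simp: cscale_def unitc_def)
  also have "\<dots> = (if (t, r, s) \<in> Idx then f t r s else 0)"
    using finite_Idx by (simp add: sum.delta')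
  also have "\<dots> = f t r s"
    using f len unfolding cochains1_def Idx_def by auto
  finally show "f t r s = (\<Sum>x\<in>Idx. cscale (f (fst x) (fst (snd x)) (snd (snd x))) (unitc x)) t r s" ..
qed

lemma vs_cscale: "vector_space (cscale :: 'k::field \<Rightarrow> 'k cochain \<Rightarrow> 'k cochain)"
  by unfold_locales (simp_all add: cscale_def fun_eq_iff algebra_simps)

lemma C_add: "f \<in> Cset \<Longrightarrow> g \<in> Cset \<Longrightarrow> f + g \<in> Cset"
  unfolding cochains1_def
proof (clarify)
  fix j r s
  assume f: "\<forall>j r s. f j r s \<noteq> 0 \<longrightarrow> Suc j < length c \<and> r < JD (Suc j) \<and> s < JD j"
    and g: "\<forall>j r s. g j r s \<noteq> 0 \<longrightarrow> Suc j < length c \<and> r < JD (Suc j) \<and> s < JD j"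
    and ne: "(f + g) j r s \<noteq> 0"
  then have "f j r s \<noteq> 0 \<or> g j r s \<noteq> 0" by auto
  then show "Suc j < length c \<and> r < JD (Suc j) \<and> s < JD j" using f g by blast
qed

lemma C_diff: "f \<in> Cset \<Longrightarrow> g \<in> Cset \<Longrightarrow> f - g \<in> Cset"
  unfolding cochains1_def
proof (clarify)
  fix j r s
  assume f: "\<forall>j r s. f j r s \<noteq> 0 \<longrightarrow> Suc j < length c \<and> r < JD (Suc j) \<and> s < JD j"
    and g: "\<forall>j r s. g j r s \<noteq> 0 \<longrightarrow> Suc j < length c \<and> r < JD (Suc j) \<and> s < JD j"
    and ne: "(f - g) j r s \<noteq> 0"
  then have "f j r s \<noteq> 0 \<or> g j r s \<noteq> 0" by auto
  then show "Suc j < length c \<and> r < JD (Suc j) \<and> s < JD j" using f g by blast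
qed

lemma C_scale: "f \<in> Cset \<Longrightarrow> cscale x f \<in> Cset"
  unfolding cochains1_def cscale_def by auto

lemma C_sum: "(\<And>q. q \<in> A \<Longrightarrow> H q \<in> Cset) \<Longrightarrow> sum H A \<in> Cset"
proof (induction A rule: infinite_finite_induct)
  case (infinite A) then show ?case by (simp add: cochains1_def)
next
  case empty then show ?case by (simp add: cochains1_def)
next
  case (insert x A)
  have "H x \<in> Cset" using insert.prems by blast
  moreover have "sum H A \<in> Cset" using insert by blast
  ultimately have "H x + sum H A \<in> Cset" by (rule C_add)
  then show ?case unfolding sum.insert[OF insert.hyps] .
qed

lemma finite_Q: "finite Qset"
  by (rule finite_subset[of _ "{..<Suc n} \<times> {..<Suc n}"]) (auto simp: Qset_def)

lemma dim_eq: "vector_space.dim (cscale :: 'k::field \<Rightarrow> 'k cochain \<Rightarrow> 'k cochain) Zset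
    = vector_space.dim (cscale :: 'k \<Rightarrow> 'k cochain \<Rightarrow> 'k cochain) Bset + card Qset"
proof -
  interpret vs: vector_space "cscale :: 'k \<Rightarrow> 'k cochain \<Rightarrow> 'k cochain" by (rule vs_cscale)
  let ?\<sigma> = "\<lambda>q (f :: 'k cochain). Ssum f (fst q) (snd q)"
  show ?thesis
  proof (rule vs.dim_quotient_count[where T = "unitc ` Idx" and w = wv and \<sigma> = ?\<sigma>])
    show "Bset \<subseteq> Zset" by (rule B_sub_Z)
    show "Zset \<subseteq> vs.span (unitc ` Idx)"
    proof
      fix f :: "'k cochain" assume "f \<in> Zset"
      then have fC: "f \<in> Cset" using Z_iff by blast
      have "(\<Sum>x\<in>Idx. cscale (f (fst x) (fst (snd x)) (snd (snd x))) (unitc x)) \<in> vs.span (unitc ` Idx)"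
        by (intro vs.span_sum vs.span_scale vs.span_base) auto
      then show "f \<in> vs.span (unitc ` Idx)" using C_repr[OF fC] by simp
    qed
    show "finite (unitc ` Idx)" using finite_Idx by simp
    show "finite Qset" by (rule finite_Q)
    show "\<And>q. q \<in> Qset \<Longrightarrow> wv q \<in> Zset" by (rule wv_Z)
    show "\<And>q x y. q \<in> Qset \<Longrightarrow> ?\<sigma> q (x + y) = ?\<sigma> q x + ?\<sigma> q y" by (simp add: Ssum_add)
    show "\<And>q a x. q \<in> Qset \<Longrightarrow> ?\<sigma> q (cscale a x) = a * ?\<sigma> q x" by (simp add: Ssum_scale)
    show "\<And>q x. q \<in> Qset \<Longrightarrow> x \<in> Bset \<Longrightarrow> ?\<sigma> q x = 0" by (rule sigma_B)
    show "\<And>q q'. q \<in> Qset \<Longrightarrow> q' \<in> Qset \<Longrightarrow> ?\<sigma> q (wv q') = (if q = q' then 1 else 0)"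
      by (rule sigma_w)
    show "x - (\<Sum>q\<in>Qset. cscale (?\<sigma> q x) (wv q)) \<in> vs.span Bset" if xZ: "x \<in> Zset" for x
    proof -
      let ?h = "x - (\<Sum>q\<in>Qset. cscale (?\<sigma> q x) (wv q))"
      have xC: "x \<in> Cset" and xc: "constr x" using xZ Z_iff by auto
      have hC: "?h \<in> Cset"
        by (intro C_diff[OF xC] C_sum C_scale wv_C)
      have Sh: "Ssum ?h i' i = Ssum x i' i - (\<Sum>q\<in>Qset. ?\<sigma> q x * Ssum (wv q) i' i)" for i' i
        by (simp add: Ssum_diff Ssum_sum Ssum_scale)
      have hc: "constr ?h"
        unfolding constr_def
      proof (intro allI impI)
        fix k i i' assume H: "k < Suc n \<and> EE c k < Suc n \<and> i < k \<and> k < EE c i \<and> i' < EE c k \<and> EE c k < EE c i'"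
        have "Ssum x i' i = 0" using xc H unfolding constr_def by blast
        moreover have "Ssum (wv q :: 'k cochain) i' i = 0" if "q \<in> Qset" for q
          using wv_constr[OF that] H unfolding constr_def by blast
        ultimately show "Ssum ?h i' i = 0" unfolding Sh by simp
      qed
      have hq: "\<forall>q\<in>Qset. Ssum ?h (fst q) (snd q) = 0"
      proof
        fix q0 assume q0: "q0 \<in> Qset"
        have "(\<Sum>q\<in>Qset. ?\<sigma> q x * Ssum (wv q :: 'k cochain) (fst q0) (snd q0))
            = (\<Sum>q\<in>Qset. if q0 = q then ?\<sigma> q x else 0)"
          by (rule sum.cong[OF refl]) (simp add: sigma_w[OF q0])
        also have "\<dots> = ?\<sigma> q0 x" using q0 finite_Q by (simp add: sum.delta)
        finally show "Ssum ?h (fst q0) (snd q0) = 0" unfolding Sh by simp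
      qed
      have "?h \<in> Bset" by (rule Bchar[OF hC hc hq])
      then show ?thesis by (rule vs.span_base)
    qed
  qed
qed

lemma ext1_dim_Q: "ext1_dim c JD (rad_map c :: nat \<Rightarrow> nat \<Rightarrow> nat \<Rightarrow> 'k::field) JD (rad_map c) = card Qset"
proof -
  have "vector_space.dim (cscale :: 'k \<Rightarrow> 'k cochain \<Rightarrow> 'k cochain) Zset
    = vector_space.dim (cscale :: 'k \<Rightarrow> 'k cochain \<Rightarrow> 'k cochain) Bset + card Qset"
    by (rule dim_eq)
  then show ?thesis unfolding ext1_dim_def by simp
qed

lemma card_Q: "card Qset = card (Tset c)"
proof -
  have inj: "inj_on fst Qset"
  proof (rule inj_onI)
    fix x y assume x: "x \<in> Qset" and y: "y \<in> Qset" and e: "fst x = fst y"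
    obtain i' i1 where xx: "x = (i', i1)" by (cases x)
    obtain i2 where yy: "y = (i', i2)" using e xx by (cases y) auto
    note fx = Q_facts[OF x[unfolded xx]] and fy = Q_facts[OF y[unfolded yy]]
    have "\<not> i1 < i2"
    proof
      assume "i1 < i2"
      then have "EE c (Suc i1) \<le> EE c i2" using E_mono'[of "Suc i1" i2] fy by auto
      then show False using fx fy by auto
    qed
    moreover have "\<not> i2 < i1"
    proof
      assume "i2 < i1"
      then have "EE c (Suc i2) \<le> EE c i1" using E_mono'[of "Suc i2" i1] fx by auto
      then show False using fx fy by auto
    qed
    ultimately show "x = y" using xx yy by auto
  qed
  have img: "fst ` Qset = Tset c"
  proof (intro set_eqI iffI)
    fix j assume "j \<in> fst ` Qset"
    then obtain i where q: "(j, i) \<in> Qset" by force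
    note f = Q_facts[OF q]
    have "c ! i \<le> c ! Suc i" using f by (auto simp: EE_def)
    then show "j \<in> Tset c" unfolding Tset_def using f len by auto
  next
    fix j assume "j \<in> Tset c"
    then obtain i0 where j: "j < Suc n" and i0: "i0 < j" "j < EE c i0" "Suc i0 < Suc n" "c ! i0 \<le> c ! Suc i0"
      unfolding Tset_def using len by auto
    define K where "K = {k. k < j \<and> EE c k < EE c j}"
    have i0K: "i0 \<in> K"
    proof -
      have "EE c i0 < EE c (Suc i0)" using i0 by (auto simp: EE_def)
      moreover have "EE c (Suc i0) \<le> EE c j" using E_mono'[of "Suc i0" j] i0 j by auto
      ultimately show ?thesis unfolding K_def using i0 by auto
    qed
    have finK: "finite K" unfolding K_def by auto
    define i where "i = Max K"
    have iK: "i \<in> K" unfolding i_def using finK i0K by (intro Max_in) auto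
    have i0i: "i0 \<le> i" unfolding i_def using finK i0K by (rule Max_ge)
    have ij: "i < j" "EE c i < EE c j" using iK K_def by auto
    have "EE c i0 \<le> EE c i" using E_mono'[of i0 i] i0i ij j by auto
    then have jE: "j < EE c i" using i0 by auto
    have "EE c (Suc i) = EE c j"
    proof (rule ccontr)
      assume ne: "EE c (Suc i) \<noteq> EE c j"
      have "EE c (Suc i) \<le> EE c j" using E_mono'[of "Suc i" j] ij j by auto
      with ne have lt: "EE c (Suc i) < EE c j" by auto
      then have "Suc i \<noteq> j" by auto
      then have "Suc i < j" using ij by auto
      then have "Suc i \<in> K" using lt K_def by auto
      then have "Suc i \<le> i" unfolding i_def using finK by (simp add: Max_ge)
      then show False by auto
    qed
    then have "(j, i) \<in> Qset" unfolding Qset_def using ij jE j by auto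
    then show "j \<in> fst ` Qset" by force
  qed
  have "bij_betw fst Qset (Tset c)" unfolding bij_betw_def using inj img by auto
  then show ?thesis by (rule bij_betw_same_card)
qed

end





lemma bjs_preserve:
  fixes \<pi> :: "nat \<Rightarrow> nat"
  assumes \<pi>: "\<pi> permutes {1..n}" and V: "\<And>d a. (d, a) \<in> V \<Longrightarrow> 1 \<le> d \<and> d \<le> a \<and> \<pi> d = a + 1"
    and mono: "strict_mono_on ({1..n} - fst ` V) \<pi>" and i: "i \<le> n"
  shows "\<pi> ` {1..i} \<noteq> {1..i} \<longleftrightarrow> (\<exists>(d, a)\<in>V. d \<le> i \<and> i \<le> a)"
proof
  assume "\<exists>(d, a)\<in>V. d \<le> i \<and> i \<le> a"
  then obtain d a where da: "(d, a) \<in> V" "d \<le> i" "i \<le> a" by auto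
  then have "\<pi> d = a + 1" "1 \<le> d" using V by auto
  then have "d \<in> {1..i}" using da by auto
  then have "\<pi> d \<in> \<pi> ` {1..i}" by (rule imageI)
  moreover have "\<pi> d \<notin> {1..i}" using da \<open>\<pi> d = a + 1\<close> by auto
  ultimately show "\<pi> ` {1..i} \<noteq> {1..i}" by blast
next
  assume H: "\<pi> ` {1..i} \<noteq> {1..i}"
  show "\<exists>(d, a)\<in>V. d \<le> i \<and> i \<le> a"
  proof (rule ccontr)
    assume no: "\<not> (\<exists>(d, a)\<in>V. d \<le> i \<and> i \<le> a)"
    have inj: "inj \<pi>" using \<pi> by (rule permutes_inj)
    have sub: "\<pi> ` {1..i} \<subseteq> {1..i}"
    proof
      fix v assume "v \<in> \<pi> ` {1..i}"
      then obtain x where x: "x \<in> {1..i}" "v = \<pi> x" by auto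
      have xn: "\<pi> x \<in> {1..n}" using permutes_in_image[OF \<pi>, of x] x i by auto
      show "v \<in> {1..i}"
      proof (rule ccontr)
        assume "v \<notin> {1..i}"
        then have big: "i < \<pi> x" using x xn by auto
        show False
        proof (cases "x \<in> fst ` V")
          case True
          then obtain pr where "pr \<in> V" "x = fst pr" by auto
          then obtain a where xa: "(x, a) \<in> V" by (cases pr) auto
          then have "i \<le> a" using V[of x a] big by auto
          then show False using no xa x by auto
        next
          case False
          then have xX: "x \<in> {1..n} - fst ` V" using x i by auto
          define Y where "Y = {y \<in> {1..n}. \<pi> y \<le> i}"
          have "{1..i} \<subseteq> \<pi> ` Y"
          proof
            fix v assume v: "v \<in> {1..i}"
            then have "v \<in> \<pi> ` {1..n}" using permutes_image[OF \<pi>] i by auto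
            then obtain y where "y \<in> {1..n}" "v = \<pi> y" by auto
            then show "v \<in> \<pi> ` Y" using v by (auto simp: Y_def)
          qed
          then have "card {1..i} \<le> card (\<pi> ` Y)" by (intro card_mono) (auto simp: Y_def)
          also have "\<dots> \<le> card Y" by (rule card_image_le) (auto simp: Y_def)
          finally have c1: "i \<le> card Y" by simp
          have "Y \<subseteq> {1..i} - {x}"
          proof
            fix y assume y: "y \<in> Y"
            then have yn: "y \<in> {1..n}" "\<pi> y \<le> i" by (auto simp: Y_def)
            have "y \<noteq> x" using yn big by auto
            moreover have "y \<le> i"
            proof (cases "y \<in> fst ` V")
              case True
              then obtain pr where "pr \<in> V" "y = fst pr" by auto
              then obtain a where ya: "(y, a) \<in> V" by (cases pr) auto
              then show ?thesis using V[of y a] yn by auto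
            next
              case False
              then have yX: "y \<in> {1..n} - fst ` V" using yn by auto
              have "\<not> x < y"
              proof
                assume "x < y"
                then have "\<pi> x < \<pi> y" using strict_mono_onD[OF mono xX yX] by auto
                then show False using yn big by auto
              qed
              then show ?thesis using x by auto
            qed
            ultimately show "y \<in> {1..i} - {x}" using yn by auto
          qed
          then have "card Y \<le> card ({1..i} - {x})" by (intro card_mono) auto
          also have "\<dots> = i - 1" using x by auto
          finally show False using c1 x by auto
        qed
      qed
    qed
    have "\<pi> ` {1..i} = {1..i}"
      by (rule endo_inj_surj[OF _ sub]) (auto intro: inj_on_subset[OF inj])
    with H show False by simp
  qed
qed


definition FF :: "nat list \<Rightarrow> nat \<Rightarrow> nat" where "FF c i = 2 * i + c ! i"


context
  fixes c :: "nat list" and n :: nat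
  assumes kup: "kupisch c" and len: "length c = Suc n"
begin

lemma c_ge2: "i < n \<Longrightarrow> 2 \<le> c ! i"
  using kup len by (auto simp: kupisch_def)

lemma c_step: "i < n \<Longrightarrow> c ! i \<le> c ! Suc i + 1"
  using kup len by (auto simp: kupisch_def)

lemma c_last: "c ! n = 1"
  using kup len by (auto simp: kupisch_def)

lemma F_less: "i < j \<Longrightarrow> j \<le> n \<Longrightarrow> FF c i < FF c j"
proof (induction j)
  case 0 then show ?case by simp
next
  case (Suc j)
  have "FF c j < FF c (Suc j)" using c_step[of j] Suc(3) by (auto simp: FF_def)
  then show ?case using Suc by (cases "i = j") auto
qed

lemma F_le_mono: "i \<le> j \<Longrightarrow> j \<le> n \<Longrightarrow> FF c i \<le> FF c j"
  using F_less[of i j] by (cases "i = j") auto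

lemma F_mono_iff: "i \<le> n \<Longrightarrow> j \<le> n \<Longrightarrow> FF c i < FF c j \<longleftrightarrow> i < j"
  using F_less[of i j] F_less[of j i] by (cases i j rule: linorder_cases) auto

lemma F_inj: "i \<le> n \<Longrightarrow> j \<le> n \<Longrightarrow> FF c i = FF c j \<longleftrightarrow> i = j"
  using F_less[of i j] F_less[of j i] by (cases i j rule: linorder_cases) auto

lemma F_n: "FF c n = 2 * n + 1"
  using c_last by (simp add: FF_def)

lemma c_n1: "1 \<le> n \<Longrightarrow> c ! (n - 1) = 2"
  using c_ge2[of "n-1"] c_step[of "n-1"] c_last by auto

lemma F_n1: "1 \<le> n \<Longrightarrow> FF c (n - 1) = 2 * n"
  using c_n1 by (simp add: FF_def)

lemma F_le: "1 \<le> n \<Longrightarrow> i < n \<Longrightarrow> FF c i \<le> 2 * n"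
proof (cases "i < n - 1")
  case True
  then show ?thesis using F_less[of i "n-1"] F_n1 by auto
next
  case False
  assume "1 \<le> n" "i < n"
  with False have "i = n - 1" by auto
  then show ?thesis using F_n1 \<open>1 \<le> n\<close> by simp
qed

lemma E_mono: "i \<le> j \<Longrightarrow> j \<le> n \<Longrightarrow> EE c i \<le> EE c j"
proof (induction j)
  case 0 then show ?case by simp
next
  case (Suc j)
  have "EE c j \<le> EE c (Suc j)" using c_step[of j] Suc(3) by (auto simp: EE_def)
  then show ?case using Suc by (cases "i = Suc j") auto
qed

lemma E_n: "EE c n = Suc n"
  using c_last by (simp add: EE_def)

lemma E_le: "i \<le> n \<Longrightarrow> EE c i \<le> Suc n"
  using E_mono[of i n] E_n by simp

lemma height:
  assumes x: "x \<le> 2 * n" and i: "i \<le> n" and lt: "2 * n - x < FF c i"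
    and ge: "i = 0 \<or> FF c (i - 1) \<le> 2 * n - x"
  shows "dyck_height c x = 2 * n - x - 2 * i"
proof -
  let ?y = "2 * n - x"
  have two: "2 * i \<le> ?y"
  proof (cases "i = 0")
    case False
    then have "FF c (i - 1) \<le> ?y" using ge by auto
    moreover have "2 \<le> c ! (i - 1)" using c_ge2[of "i - 1"] i False by auto
    ultimately show ?thesis using False by (auto simp: FF_def)
  qed simp
  define S where "S = {k - 1 | i k. i \<le> n \<and> 1 \<le> k \<and> k \<le> c ! i \<and> 2 * i + k - 1 = 2 * n - x}"
  have dh: "dyck_height c x = Max S" unfolding dyck_height_def S_def using len by simp
  have mem: "?y - 2 * i \<in> S"
    unfolding S_def using two lt i
    by (intro CollectI exI[of _ i] exI[of _ "?y - 2 * i + 1"]) (auto simp: FF_def)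
  have bound: "e \<le> ?y - 2 * i" if "e \<in> S" for e
  proof -
    from that obtain i' k where ik: "e = k - 1" "i' \<le> n" "1 \<le> k" "k \<le> c ! i'" "2 * i' + k - 1 = ?y"
      unfolding S_def by blast
    have "?y < FF c i'" using ik by (auto simp: FF_def)
    have "i \<le> i'"
    proof (rule ccontr)
      assume "\<not> i \<le> i'"
      then have "i' \<le> i - 1" "i \<noteq> 0" by auto
      then have "FF c i' \<le> FF c (i - 1)"
        using F_le_mono[of i' "i - 1"] i by auto
      then show False using ge \<open>i \<noteq> 0\<close> \<open>?y < FF c i'\<close> by auto
    qed
    then show ?thesis using ik by auto
  qed
  have fin: "finite S"
  proof (rule finite_subset[of _ "{..?y}"])
    show "S \<subseteq> {..?y}" unfolding S_def by auto
  qed simp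
  show ?thesis unfolding dh by (rule Max_eqI[OF fin bound mem])
qed

lemma height_exists:
  assumes "y \<le> 2 * n"
  shows "\<exists>i \<le> n. y < FF c i \<and> (i = 0 \<or> FF c (i - 1) \<le> y)"
proof -
  define i where "i = (LEAST i. y < FF c i)"
  have ex: "y < FF c n" using F_n assms by simp
  have "y < FF c i" unfolding i_def by (rule LeastI[of _ n]) (rule ex)
  moreover have "i \<le> n" unfolding i_def by (rule Least_le) (rule ex)
  moreover have "i = 0 \<or> FF c (i - 1) \<le> y"
  proof (cases "i = 0")
    case False
    then have "\<not> y < FF c (i - 1)" unfolding i_def by (intro not_less_Least) (auto simp: i_def)
    then show ?thesis by auto
  qed simp
  ultimately show ?thesis by blast
qed

lemma length_word: "length (dyck_word c) = 2 * n"
  using len by (simp add: dyck_word_def)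

lemma word_nth:
  assumes n1: "1 \<le> n" and x: "x < 2 * n"
  shows "dyck_word c ! x = (2 * n - x \<in> FF c ` {..<n})"
proof -
  let ?y = "2 * n - x"
  have nth: "dyck_word c ! x = (dyck_height c x < dyck_height c (Suc x))"
    using x len by (simp add: dyck_word_def)
  obtain i where i: "i \<le> n" "?y < FF c i" "i = 0 \<or> FF c (i - 1) \<le> ?y"
    using height_exists[of ?y] by auto
  have hx: "dyck_height c x = ?y - 2 * i" by (rule height) (use x i in auto)
  have two: "2 * i \<le> ?y"
  proof (cases "i = 0")
    case False
    then have "FF c (i - 1) \<le> ?y" using i by auto
    moreover have "2 \<le> c ! (i - 1)" using c_ge2[of "i - 1"] i False by auto
    ultimately show ?thesis using False by (auto simp: FF_def)
  qed simp
  show ?thesis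
  proof (cases "i \<noteq> 0 \<and> FF c (i - 1) = ?y")
    case True
    then have "i - 1 < n" using i by auto
    have hx1: "dyck_height c (Suc x) = (2 * n - Suc x) - 2 * (i - 1)"
    proof (rule height)
      show "2 * n - Suc x < FF c (i - 1)" using True x by auto
      show "i - 1 = 0 \<or> FF c (i - 1 - 1) \<le> 2 * n - Suc x"
      proof (cases "i - 1 = 0")
        case False
        then have "FF c (i - 1 - 1) < FF c (i - 1)" using F_less[of "i-1-1" "i-1"] i by auto
        then show ?thesis using True x by auto
      qed simp
    qed (use x i in auto)
    have "dyck_height c x < dyck_height c (Suc x)" unfolding hx hx1 using True two x i
      by (auto simp: FF_def)
    moreover have "?y \<in> FF c ` {..<n}" using True \<open>i - 1 < n\<close> by (auto intro!: image_eqI[of _ _ "i - 1"])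
    ultimately show ?thesis using nth by simp
  next
    case False
    then have lt: "i = 0 \<or> FF c (i - 1) < ?y" using i by auto
    have two': "2 * i < ?y"
    proof (cases "i = 0")
      case True then show ?thesis using x by simp
    next
      case False
      then have "FF c (i - 1) < ?y" using lt by auto
      moreover have "2 \<le> c ! (i - 1)" using c_ge2[of "i - 1"] i False by auto
      ultimately show ?thesis using False by (auto simp: FF_def)
    qed
    have hx1: "dyck_height c (Suc x) = (2 * n - Suc x) - 2 * i"
      by (rule height) (use x i lt in auto)
    have "\<not> dyck_height c x < dyck_height c (Suc x)" unfolding hx hx1 using two' by auto
    moreover have "?y \<notin> FF c ` {..<n}"
    proof
      assume "?y \<in> FF c ` {..<n}"
      then obtain i' where i': "i' < n" "FF c i' = ?y" by auto
      have "i' < i" using F_mono_iff[of i' i] i i' by auto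
      then have "i' \<le> i - 1" by auto
      have "FF c i' \<le> FF c (i - 1)"
        using F_le_mono[of i' "i - 1"] i \<open>i' \<le> i - 1\<close> by auto
      then show False using lt i' \<open>i' < i\<close> by auto
    qed
    ultimately show ?thesis using nth by simp
  qed
qed

lemma ups_card: "p \<le> 2 * n \<Longrightarrow> ups_before (dyck_word c) p = card {x. x < p \<and> dyck_word c ! x}"
proof -
  assume p: "p \<le> 2 * n"
  have "ups_before (dyck_word c) p = card {i. i < length (take p (dyck_word c)) \<and> id (take p (dyck_word c) ! i)}"
    unfolding ups_before_def by (rule length_filter_conv_card)
  also have "\<dots> = card {x. x < p \<and> dyck_word c ! x}"
    using p length_word by (intro arg_cong[where f=card]) auto
  finally show ?thesis .
qed

lemma downs_ups: "p \<le> 2 * n \<Longrightarrow> downs_before (dyck_word c) p = p - ups_before (dyck_word c) p"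
proof -
  assume p: "p \<le> 2 * n"
  have "length (filter id (take p (dyck_word c))) + length (filter Not (take p (dyck_word c))) = p"
    using sum_length_filter_compl[of id "take p (dyck_word c)"] p length_word by simp
  then show ?thesis unfolding ups_before_def downs_before_def by linarith
qed

lemma ups_at:
  assumes n1: "1 \<le> n" and i: "i < n"
  shows "ups_before (dyck_word c) (2 * n - FF c i) = n - 1 - i"
proof -
  have Fi: "FF c i \<le> 2 * n" using F_le[OF n1 i] .
  have eq: "{x. x < 2 * n - FF c i \<and> dyck_word c ! x} = (\<lambda>i'. 2 * n - FF c i') ` {i<..<n}"
  proof (intro set_eqI iffI)
    fix x assume "x \<in> {x. x < 2 * n - FF c i \<and> dyck_word c ! x}"
    then have x: "x < 2 * n - FF c i" "dyck_word c ! x" by auto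
    then have "x < 2 * n" by auto
    with x word_nth[OF n1] obtain i' where i': "i' < n" "FF c i' = 2 * n - x" by auto
    then have "FF c i < FF c i'" using x by auto
    then have "i < i'" using F_mono_iff[of i i'] i i' by auto
    then show "x \<in> (\<lambda>i'. 2 * n - FF c i') ` {i<..<n}" using i' x by (auto intro!: image_eqI[of _ _ i'])
  next
    fix x assume "x \<in> (\<lambda>i'. 2 * n - FF c i') ` {i<..<n}"
    then obtain i' where i': "i < i'" "i' < n" "x = 2 * n - FF c i'" by auto
    have "FF c i < FF c i'" using F_less[of i i'] i' by auto
    moreover have "FF c i' \<le> 2 * n" using F_le[OF n1 i'(2)] .
    moreover have "FF c i' > 0" using c_ge2[of i'] i' by (auto simp: FF_def)
    ultimately have "x < 2 * n - FF c i" "x < 2 * n" "2 * n - x = FF c i'" using i' Fi by auto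
    then show "x \<in> {x. x < 2 * n - FF c i \<and> dyck_word c ! x}"
      using word_nth[OF n1, of x] i' by auto
  qed
  have inj: "inj_on (\<lambda>i'. 2 * n - FF c i') {i<..<n}"
  proof (rule inj_onI)
    fix a b assume a: "a \<in> {i<..<n}" and b: "b \<in> {i<..<n}" and e: "2 * n - FF c a = 2 * n - FF c b"
    have "FF c a \<le> 2 * n" "FF c b \<le> 2 * n" using F_le[OF n1] a b by auto
    then have "FF c a = FF c b" using e by auto
    then show "a = b" using F_inj[of a b] a b by auto
  qed
  show ?thesis using Fi
    by (simp add: ups_card eq card_image[OF inj])
qed

lemma downs_at:
  assumes n1: "1 \<le> n" and i: "i < n"
  shows "downs_before (dyck_word c) (2 * n - FF c i) = Suc n - EE c i"
proof -
  have Fi: "FF c i \<le> 2 * n" using F_le[OF n1 i] .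
  have "EE c i \<le> Suc n" using E_le[of i] i by auto
  then show ?thesis using downs_ups[of "2 * n - FF c i"] ups_at[OF n1 i] Fi i
    by (simp add: FF_def EE_def)
qed

lemma valleys_eq:
  assumes n1: "1 \<le> n"
  shows "valleys (dyck_word c) = (\<lambda>i. 2 * n - FF c i) ` {i. Suc i < n \<and> c ! i \<le> c ! Suc i}"
proof (intro set_eqI iffI)
  fix p assume "p \<in> valleys (dyck_word c)"
  then have p: "0 < p" "p < 2 * n" "\<not> dyck_word c ! (p - 1)" "dyck_word c ! p"
    unfolding valleys_def using length_word by auto
  obtain i where i: "i < n" "FF c i = 2 * n - p" using word_nth[OF n1 p(2)] p(4) by auto
  have "FF c i < FF c (n - 1)" using F_n1[OF n1] i p by auto
  then have i1: "Suc i < n" using F_mono_iff[of i "n - 1"] i by auto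
  have nm: "2 * n - (p - 1) \<notin> FF c ` {..<n}" using word_nth[OF n1, of "p - 1"] p by auto
  have "c ! i \<le> c ! Suc i"
  proof (rule ccontr)
    assume "\<not> c ! i \<le> c ! Suc i"
    then have "c ! i = c ! Suc i + 1" using c_step[of i] i by auto
    then have "FF c (Suc i) = 2 * n - (p - 1)" using i p by (auto simp: FF_def)
    then show False using nm i1 by (metis image_eqI lessThan_iff)
  qed
  then show "p \<in> (\<lambda>i. 2 * n - FF c i) ` {i. Suc i < n \<and> c ! i \<le> c ! Suc i}"
    using i i1 p by (auto intro!: image_eqI[of _ _ i])
next
  fix p assume "p \<in> (\<lambda>i. 2 * n - FF c i) ` {i. Suc i < n \<and> c ! i \<le> c ! Suc i}"
  then obtain i where i: "Suc i < n" "c ! i \<le> c ! Suc i" "p = 2 * n - FF c i" by auto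
  have "FF c i < FF c (n - 1)" using F_less[of i "n - 1"] i by auto
  then have Flt: "FF c i < 2 * n" using F_n1[OF n1] by simp
  have Fpos: "2 \<le> FF c i" using c_ge2[of i] i by (auto simp: FF_def)
  have p0: "0 < p" "p < 2 * n" using Flt Fpos i by auto
  have "dyck_word c ! p" using word_nth[OF n1 p0(2)] i Flt by auto
  moreover have "\<not> dyck_word c ! (p - 1)"
  proof
    assume "dyck_word c ! (p - 1)"
    then have "2 * n - (p - 1) \<in> FF c ` {..<n}" using word_nth[OF n1, of "p - 1"] p0 by auto
    then obtain i' where i': "i' < n" "FF c i' = 2 * n - (p - 1)" by auto
    then have "FF c i' = FF c i + 1" using i Flt p0 by auto
    then have "i < i'" using F_mono_iff[of i i'] i i' by auto
    then have "FF c (Suc i) \<le> FF c i'" using F_le_mono[of "Suc i" i'] i' by auto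
    moreover have "FF c (Suc i) \<ge> FF c i + 2" using i by (auto simp: FF_def)
    ultimately show False using \<open>FF c i' = FF c i + 1\<close> by auto
  qed
  ultimately show "p \<in> valleys (dyck_word c)" unfolding valleys_def using p0 length_word by auto
qed


lemma valley_E: "Suc k < n \<Longrightarrow> c ! k \<le> c ! Suc k \<Longrightarrow> EE c k \<le> n"
  using E_le[of "Suc k"] by (auto simp: EE_def)

lemma T_char:
  assumes n1: "1 \<le> n" and i: "1 \<le> i" "i < n"
  shows "(\<exists>k. Suc k < n \<and> c ! k \<le> c ! Suc k \<and> Suc n - EE c k \<le> i \<and> i \<le> n - 1 - k)
     \<longleftrightarrow> n - i \<in> Tset c"
proof
  assume "\<exists>k. Suc k < n \<and> c ! k \<le> c ! Suc k \<and> Suc n - EE c k \<le> i \<and> i \<le> n - 1 - k"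
  then obtain k where k: "Suc k < n" "c ! k \<le> c ! Suc k" "Suc n - EE c k \<le> i" "i \<le> n - 1 - k" by blast
  have "EE c k \<le> n" using valley_E k by auto
  then show "n - i \<in> Tset c" unfolding Tset_def using k i len
    by (auto intro!: exI[of _ k])
next
  assume "n - i \<in> Tset c"
  then obtain k where k: "k < n - i" "n - i < EE c k" "Suc k < length c" "c ! k \<le> c ! Suc k"
    unfolding Tset_def by blast
  have "Suc k < n"
  proof (rule ccontr)
    assume "\<not> Suc k < n"
    then have "k = n - 1" using k len by auto
    then show False using k(4) c_n1[OF n1] c_last n1 by auto
  qed
  then show "\<exists>k. Suc k < n \<and> c ! k \<le> c ! Suc k \<and> Suc n - EE c k \<le> i \<and> i \<le> n - 1 - k"
    using k i by (intro exI[of _ k]) auto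
qed

lemma support_set:
  assumes n1: "1 \<le> n" and bjs: "bjs_perm n (dyck_word c) \<pi>"
  shows "{i \<in> {1..<n}. \<pi> ` {1..i} \<noteq> {1..i}} = (\<lambda>j. n - j) ` Tset c"
proof -
  let ?W = "dyck_word c"
  define V where "V = (\<lambda>p. (downs_before ?W p, ups_before ?W p)) ` valleys ?W"
  have \<pi>: "\<pi> permutes {1..n}" and val: "\<forall>p\<in>valleys ?W. \<pi> (downs_before ?W p) = ups_before ?W p + 1"
    and mono: "strict_mono_on ({1..n} - downs_before ?W ` valleys ?W) \<pi>"
    using bjs unfolding bjs_perm_def by auto
  have fV: "fst ` V = downs_before ?W ` valleys ?W" unfolding V_def by (simp add: image_image)
  have Vchar: "(d, a) \<in> V \<longleftrightarrow> (\<exists>k. Suc k < n \<and> c ! k \<le> c ! Suc k \<and> d = Suc n - EE c k \<and> a = n - 1 - k)"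
    for d a
  proof
    assume "(d, a) \<in> V"
    then obtain p where p: "p \<in> valleys ?W" "d = downs_before ?W p" "a = ups_before ?W p"
      unfolding V_def by auto
    then obtain k where k: "Suc k < n" "c ! k \<le> c ! Suc k" "p = 2 * n - FF c k"
      using valleys_eq[OF n1] by auto
    show "\<exists>k. Suc k < n \<and> c ! k \<le> c ! Suc k \<and> d = Suc n - EE c k \<and> a = n - 1 - k"
      using k p downs_at[OF n1, of k] ups_at[OF n1, of k] by (intro exI[of _ k]) auto
  next
    assume "\<exists>k. Suc k < n \<and> c ! k \<le> c ! Suc k \<and> d = Suc n - EE c k \<and> a = n - 1 - k"
    then obtain k where k: "Suc k < n" "c ! k \<le> c ! Suc k" "d = Suc n - EE c k" "a = n - 1 - k" by blast
    have "2 * n - FF c k \<in> valleys ?W" using valleys_eq[OF n1] k by auto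
    moreover have "d = downs_before ?W (2 * n - FF c k)" "a = ups_before ?W (2 * n - FF c k)"
      using k downs_at[OF n1, of k] ups_at[OF n1, of k] by auto
    ultimately show "(d, a) \<in> V" unfolding V_def by auto
  qed
  have Vprop: "1 \<le> d \<and> d \<le> a \<and> \<pi> d = a + 1" if da: "(d, a) \<in> V" for d a
  proof -
    from da obtain p where p: "p \<in> valleys ?W" "d = downs_before ?W p" "a = ups_before ?W p"
      unfolding V_def by blast
    obtain k where k: "Suc k < n" "c ! k \<le> c ! Suc k" "d = Suc n - EE c k" "a = n - 1 - k"
      using Vchar da by blast
    have "EE c k \<le> n" using valley_E k by auto
    moreover have "2 \<le> c ! k" using c_ge2[of k] k by auto
    ultimately have "1 \<le> d \<and> d \<le> a" using k by (auto simp: EE_def)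
    then show ?thesis using val p by auto
  qed
  have key: "\<pi> ` {1..i} \<noteq> {1..i} \<longleftrightarrow> n - i \<in> Tset c" if i: "1 \<le> i" "i < n" for i
  proof -
    have "\<pi> ` {1..i} \<noteq> {1..i} \<longleftrightarrow> (\<exists>(d, a)\<in>V. d \<le> i \<and> i \<le> a)"
      by (rule bjs_preserve[OF \<pi> Vprop]) (use mono fV i in auto)
    also have "\<dots> \<longleftrightarrow> (\<exists>k. Suc k < n \<and> c ! k \<le> c ! Suc k \<and> Suc n - EE c k \<le> i \<and> i \<le> n - 1 - k)"
      using Vchar by fastforce
    also have "\<dots> \<longleftrightarrow> n - i \<in> Tset c" by (rule T_char[OF n1 i])
    finally show ?thesis .
  qed
  have Tb: "j \<in> Tset c \<Longrightarrow> 1 \<le> j \<and> j < n" for j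
  proof -
    assume "j \<in> Tset c"
    then obtain k where k: "k < j" "j < EE c k" "Suc k < length c" "c ! k \<le> c ! Suc k"
      unfolding Tset_def by blast
    have "EE c k \<le> n"
    proof (cases "Suc k < n")
      case True then show ?thesis using valley_E k by auto
    next
      case False
      then have "k = n - 1" using k len by auto
      then show ?thesis using k(4) c_n1[OF n1] c_last n1 by auto
    qed
    then show ?thesis using k by auto
  qed
  show ?thesis
  proof (intro set_eqI iffI)
    fix i assume "i \<in> {i \<in> {1..<n}. \<pi> ` {1..i} \<noteq> {1..i}}"
    then have i: "1 \<le> i" "i < n" "\<pi> ` {1..i} \<noteq> {1..i}" by auto
    then have "n - i \<in> Tset c" using key by auto
    moreover have "i = n - (n - i)" using i by auto
    ultimately show "i \<in> (\<lambda>j. n - j) ` Tset c" by blast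
  next
    fix i assume "i \<in> (\<lambda>j. n - j) ` Tset c"
    then obtain j where j: "j \<in> Tset c" "i = n - j" by auto
    then have "1 \<le> i" "i < n" using Tb[of j] by auto
    moreover have "n - i = j" using j Tb[of j] by auto
    ultimately show "i \<in> {i \<in> {1..<n}. \<pi> ` {1..i} \<noteq> {1..i}}" using key j by auto
  qed
qed

lemma card_support_set:
  assumes n1: "1 \<le> n" and bjs: "bjs_perm n (dyck_word c) \<pi>"
  shows "card {i \<in> {1..<n}. \<pi> ` {1..i} \<noteq> {1..i}} = card (Tset c)"
proof -
  have "inj_on (\<lambda>j. n - j) (Tset c)"
    by (rule inj_onI) (auto simp: Tset_def len)
  then show ?thesis unfolding support_set[OF n1 bjs] by (rule card_image)
qed

end



theorem mainTheorem2:
  fixes n :: nat and \<pi> :: "nat \<Rightarrow> nat" and c :: "nat list"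
  assumes "1 \<le> n"
    and "\<pi> permutes {1..n}"
    and "avoids_321 n \<pi>"
    and "kupisch c" and "length c = n + 1"
    and "bjs_perm n (dyck_word c) \<pi>"
  shows "ext1_dim c (rad_dim c) (rad_map c :: nat \<Rightarrow> nat \<Rightarrow> nat \<Rightarrow> 'k::field)
                    (rad_dim c) (rad_map c) = support_size n \<pi>"
proof -
  have len: "length c = Suc n" using assms(5) by simp
  interpret KC c n using assms(4) len by unfold_locales
  have "ext1_dim c (rad_dim c) (rad_map c :: nat \<Rightarrow> nat \<Rightarrow> nat \<Rightarrow> 'k::field) (rad_dim c) (rad_map c)
      = card Qset" by (rule ext1_dim_Q)
  also have "\<dots> = card (Tset c)" by (rule card_Q)
  also have "\<dots> = card {i \<in> {1..<n}. \<pi> ` {1..i} \<noteq> {1..i}}"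
    using card_support_set[OF assms(4) len assms(1) assms(6)] by simp
  also have "\<dots> = support_size n \<pi>"
    unfolding support_size_def using support_size_eq[OF assms(2)] by simp
  finally show ?thesis .
qed

end
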